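(* Let $D$ and $\bar D$ be exact connections on vector bundles $E\to M$ and $\bar E\to\bar M$, and let $\pi:M\times\bar M\to M$ and $\bar\pi:M\times\bar M\to\bar M$ be the projections. Then $\pi^*D$ and $\bar\pi^*\bar D$ are exact connections on $\pi^*E$ and $\bar\pi^*\bar E$ over $M\times\bar M$. Moreover, $\pi^*D+\bar\pi^*\bar D$ is an exact connection on $\pi^*E\oplus\bar\pi^*\bar E$ over $M\times\bar M$.
   Context: For a connection $D$ on $E$: $D^\wedge$ is the exterior covariant derivative $\phi_b{}^\alpha\mapsto D_{[a}\phi_{b]}{}^\alpha$, $\kappa=D^\wedge\circ D$ the curvature (assumed of constant rank). $D$ is exact if every section $\phi$ of $\Lambda^1\otimes E$ with $D^\wedge\phi=\kappa(\psi)$ for some section $\psi$ of $E$ is of the form $D\eta$ for some section $\eta$ of $E$. Statements are local (on sufficiently small open sets). *)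

theory Defs
  imports "HOL-Analysis.Analysis"
begin

text \<open>Local model: a vector bundle of rank CARD('k) over an open set U of a
Euclidean space 'a, trivialised by a frame; sections are maps U -> real^'k.
Coordinate directions are the elements of Basis.\<close>

definition pd :: "'a::euclidean_space \<Rightarrow> ('a \<Rightarrow> real) \<Rightarrow> 'a \<Rightarrow> real" where
  "pd i f x = frechet_derivative f (at x) i"

fun Ck :: "nat \<Rightarrow> 'a::euclidean_space set \<Rightarrow> ('a \<Rightarrow> real) \<Rightarrow> bool" where
  "Ck 0 U f = continuous_on U f"
| "Ck (Suc k) U f = (f differentiable_on U \<and> (\<forall>i\<in>Basis. Ck k U (pd i f)))"

definition smooth :: "'a::euclidean_space set \<Rightarrow> ('a \<Rightarrow> real) \<Rightarrow> bool" where
  "smooth U f = (\<forall>k. Ck k U f)"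

definition smooth_sec :: "'a::euclidean_space set \<Rightarrow> ('a \<Rightarrow> real^'k) \<Rightarrow> bool" where
  "smooth_sec U \<eta> = (\<forall>\<alpha>. smooth U (\<lambda>x. \<eta> x $ \<alpha>))"

definition smooth_form :: "'a::euclidean_space set \<Rightarrow> ('a \<Rightarrow> 'a \<Rightarrow> real^'k) \<Rightarrow> bool" where
  "smooth_form U \<phi> = (\<forall>a\<in>Basis. smooth_sec U (\<lambda>x. \<phi> x a))"

definition smooth_connection :: "'a::euclidean_space set \<Rightarrow> ('a \<Rightarrow> 'a \<Rightarrow> real^'k^'k) \<Rightarrow> bool" where
  "smooth_connection U \<Gamma> = (\<forall>a\<in>Basis. \<forall>\<alpha> \<beta>. smooth U (\<lambda>x. \<Gamma> x a $ \<alpha> $ \<beta>))"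

definition pdv :: "'a::euclidean_space \<Rightarrow> ('a \<Rightarrow> real^'k) \<Rightarrow> 'a \<Rightarrow> real^'k" where
  "pdv i f x = (\<chi> \<alpha>. pd i (\<lambda>y. f y $ \<alpha>) x)"

definition pdm :: "'a::euclidean_space \<Rightarrow> ('a \<Rightarrow> real^'k^'k) \<Rightarrow> 'a \<Rightarrow> real^'k^'k" where
  "pdm i f x = (\<chi> \<alpha> \<beta>. pd i (\<lambda>y. f y $ \<alpha> $ \<beta>) x)"

definition Dconn :: "('a::euclidean_space \<Rightarrow> 'a \<Rightarrow> real^'k^'k) \<Rightarrow> ('a \<Rightarrow> real^'k) \<Rightarrow> 'a \<Rightarrow> 'a \<Rightarrow> real^'k" where
  "Dconn \<Gamma> \<eta> x a = pdv a \<eta> x + \<Gamma> x a *v \<eta> x"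

definition Dwedge :: "('a::euclidean_space \<Rightarrow> 'a \<Rightarrow> real^'k^'k) \<Rightarrow> ('a \<Rightarrow> 'a \<Rightarrow> real^'k) \<Rightarrow> 'a \<Rightarrow> 'a \<Rightarrow> 'a \<Rightarrow> real^'k" where
  "Dwedge \<Gamma> \<phi> x a b = (1/2) *\<^sub>R ((pdv a (\<lambda>y. \<phi> y b) x + \<Gamma> x a *v \<phi> x b)
                                  - (pdv b (\<lambda>y. \<phi> y a) x + \<Gamma> x b *v \<phi> x a))"

definition kappa :: "('a::euclidean_space \<Rightarrow> 'a \<Rightarrow> real^'k^'k) \<Rightarrow> ('a \<Rightarrow> real^'k) \<Rightarrow> 'a \<Rightarrow> 'a \<Rightarrow> 'a \<Rightarrow> real^'k" where
  "kappa \<Gamma> \<psi> = Dwedge \<Gamma> (Dconn \<Gamma> \<psi>)"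

text \<open>The curvature as a bundle map (tensor), i.e. D^\<and>(D\<psi>)_{ab} = curv_{ab} \<psi> written out;
  used to express the rank of \<kappa>.\<close>
definition curv :: "('a::euclidean_space \<Rightarrow> 'a \<Rightarrow> real^'k^'k) \<Rightarrow> 'a \<Rightarrow> 'a \<Rightarrow> 'a \<Rightarrow> real^'k^'k" where
  "curv \<Gamma> x a b = (1/2) *\<^sub>R (pdm a (\<lambda>y. \<Gamma> y b) x - pdm b (\<lambda>y. \<Gamma> y a) x
                                + \<Gamma> x a ** \<Gamma> x b - \<Gamma> x b ** \<Gamma> x a)"

definition curv_rank :: "('a::euclidean_space \<Rightarrow> 'a \<Rightarrow> real^'k^'k) \<Rightarrow> 'a \<Rightarrow> nat" where
  "curv_rank \<Gamma> x = CARD('k) - dim {v::real^'k. \<forall>a\<in>Basis. \<forall>b\<in>Basis. curv \<Gamma> x a b *v v = 0}"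

definition exact_connection :: "'a::euclidean_space set \<Rightarrow> ('a \<Rightarrow> 'a \<Rightarrow> real^'k^'k) \<Rightarrow> bool" where
  "exact_connection U \<Gamma> \<longleftrightarrow>
     smooth_connection U \<Gamma> \<and>
     (\<forall>x\<in>U. \<forall>y\<in>U. curv_rank \<Gamma> x = curv_rank \<Gamma> y) \<and>
     (\<forall>V \<phi> \<psi>. open V \<and> V \<subseteq> U \<and> smooth_form V \<phi> \<and> smooth_sec V \<psi> \<and>
        (\<forall>x\<in>V. \<forall>a\<in>Basis. \<forall>b\<in>Basis. Dwedge \<Gamma> \<phi> x a b = kappa \<Gamma> \<psi> x a b) \<longrightarrow>
        (\<forall>x\<in>V. \<exists>W. open W \<and> x \<in> W \<and> W \<subseteq> V \<and>
            (\<exists>\<eta>. smooth_sec W \<eta> \<and> (\<forall>y\<in>W. \<forall>a\<in>Basis. \<phi> y a = Dconn \<Gamma> \<eta> y a))))"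

definition pull_fst :: "('a::euclidean_space \<Rightarrow> 'a \<Rightarrow> real^'k^'k) \<Rightarrow> ('a \<times> 'b::euclidean_space) \<Rightarrow> ('a \<times> 'b) \<Rightarrow> real^'k^'k" where
  "pull_fst \<Gamma> z c = (if fst c \<in> Basis then \<Gamma> (fst z) (fst c) else 0)"

definition pull_snd :: "('b::euclidean_space \<Rightarrow> 'b \<Rightarrow> real^'l^'l) \<Rightarrow> ('a::euclidean_space \<times> 'b) \<Rightarrow> ('a \<times> 'b) \<Rightarrow> real^'l^'l" where
  "pull_snd \<Gamma> z c = (if snd c \<in> Basis then \<Gamma> (snd z) (snd c) else 0)"

definition sum_conn :: "('c \<Rightarrow> 'c \<Rightarrow> real^'k^'k) \<Rightarrow> ('c \<Rightarrow> 'c \<Rightarrow> real^'l^'l) \<Rightarrow> 'c \<Rightarrow> 'c \<Rightarrow> real^('k + 'l)^('k + 'l)" where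
  "sum_conn \<Gamma>1 \<Gamma>2 z c = (\<chi> i j. case (i, j) of
       (Inl \<alpha>, Inl \<beta>) \<Rightarrow> \<Gamma>1 z c $ \<alpha> $ \<beta>
     | (Inr \<alpha>, Inr \<beta>) \<Rightarrow> \<Gamma>2 z c $ \<alpha> $ \<beta>
     | _ \<Rightarrow> 0)"

end

theory Submission
  imports Defs
begin

lemma pd_hd: "(f has_derivative f') (at x) \<Longrightarrow> pd i f x = f' i"
  unfolding pd_def using frechet_derivative_at by metis

lemma pd_local:
  assumes "open V" "x \<in> V" "\<And>y. y \<in> V \<Longrightarrow> f y = g y"
  shows "pd i f x = pd i g x"
proof -
  have "(f has_derivative f') (at x) \<longleftrightarrow> (g has_derivative f') (at x)" for f'
    using has_derivative_transform_within_open[of f f' x UNIV V g]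
      has_derivative_transform_within_open[of g f' x UNIV V f] assms by auto
  then show ?thesis unfolding pd_def frechet_derivative_def by simp
qed

lemma diff_on_open: "open V \<Longrightarrow> f differentiable_on V \<longleftrightarrow> (\<forall>x\<in>V. f differentiable (at x))"
  by (simp add: differentiable_on_eq_differentiable_at)

lemma diff_local: "open V \<Longrightarrow> (\<And>y. y\<in>V \<Longrightarrow> f y = g y) \<Longrightarrow> f differentiable_on V \<Longrightarrow> g differentiable_on V"
  unfolding diff_on_open differentiable_def
  using has_derivative_transform_within_open[of f _ _ UNIV V g] by blast

lemma Ck_cong: "open V \<Longrightarrow> (\<And>y. y\<in>V \<Longrightarrow> f y = g y) \<Longrightarrow> Ck k V f \<Longrightarrow> Ck k V g"
proof (induction k arbitrary: f g)
  case 0 thus ?case using continuous_on_cong by force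
next
  case (Suc k)
  have "g differentiable_on V"
    using Suc.prems diff_local by auto
  moreover have "Ck k V (pd i g)" if "i \<in> Basis" for i
  proof -
    have "Ck k V (pd i f)" using Suc.prems that by auto
    moreover have "\<And>y. y \<in> V \<Longrightarrow> pd i f y = pd i g y" using pd_local[of V _ f g] Suc.prems by blast
    ultimately show ?thesis using Suc.IH Suc.prems(1) by blast
  qed
  ultimately show ?case by simp
qed

lemma Ck_Suc_imp: "Ck (Suc k) V f \<Longrightarrow> Ck k V f"
proof (induction k arbitrary: f)
  case 0 thus ?case by (simp add: differentiable_imp_continuous_on)
next
  case (Suc k) thus ?case by auto
qed

lemma Ck_le: "j \<le> k \<Longrightarrow> Ck k V f \<Longrightarrow> Ck j V f"
proof (induction k)
  case 0 thus ?case by simp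
next
  case (Suc k) thus ?case using Ck_Suc_imp by (metis le_Suc_eq)
qed
  
lemma Ck_subset: "Ck k V f \<Longrightarrow> W \<subseteq> V \<Longrightarrow> Ck k W f"
  by (induction k arbitrary: f) (auto intro: continuous_on_subset differentiable_on_subset)

lemma smooth_subset: "smooth V f \<Longrightarrow> W \<subseteq> V \<Longrightarrow> smooth W f"
  unfolding smooth_def using Ck_subset by blast

lemma smooth_cong: "open V \<Longrightarrow> (\<And>y. y\<in>V \<Longrightarrow> f y = g y) \<Longrightarrow> smooth V f \<Longrightarrow> smooth V g"
  unfolding smooth_def using Ck_cong by blast

lemma smooth_pd: "smooth V f \<Longrightarrow> i \<in> Basis \<Longrightarrow> smooth V (pd i f)"
  unfolding smooth_def by (metis Ck.simps(2))

lemma smooth_diff_on: "smooth V f \<Longrightarrow> f differentiable_on V"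
  unfolding smooth_def by (metis Ck.simps(2))

lemma smooth_diff: "smooth V f \<Longrightarrow> open V \<Longrightarrow> x \<in> V \<Longrightarrow> f differentiable (at x)"
  using smooth_diff_on diff_on_open by blast

lemma smooth_cont: "smooth V f \<Longrightarrow> continuous_on V f"
  unfolding smooth_def by (metis Ck.simps(1))

lemma pd_const: "pd i (\<lambda>x. c) x = 0"
  using pd_hd[OF has_derivative_const] .

lemma Ck_const: "Ck k V (\<lambda>x. c)"
proof (induction k arbitrary: c)
  case 0 then show ?case by simp
next
  case (Suc k)
  have "pd i (\<lambda>x. c) = (\<lambda>x::'a. 0)" for i by (rule ext, rule pd_const)
  then show ?case using Suc by simp
qed

lemma smooth_const: "smooth V (\<lambda>x. c)"
  unfolding smooth_def using Ck_const by blast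

lemma pd_add: "f differentiable (at x) \<Longrightarrow> g differentiable (at x) \<Longrightarrow>
   pd i (\<lambda>x. f x + g x) x = pd i f x + pd i g x"
proof -
  assume "f differentiable (at x)" "g differentiable (at x)"
  then obtain f' g' where f': "(f has_derivative f') (at x)" and g': "(g has_derivative g') (at x)"
    unfolding differentiable_def by blast
  have "((\<lambda>x. f x + g x) has_derivative (\<lambda>h. f' h + g' h)) (at x)"
    using has_derivative_add[OF f' g'] .
  then show ?thesis using pd_hd f' g' by metis
qed

lemma pd_diff: "f differentiable (at x) \<Longrightarrow> g differentiable (at x) \<Longrightarrow>
   pd i (\<lambda>x. f x - g x) x = pd i f x - pd i g x"
proof -
  assume "f differentiable (at x)" "g differentiable (at x)"
  then obtain f' g' where f': "(f has_derivative f') (at x)" and g': "(g has_derivative g') (at x)"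
    unfolding differentiable_def by blast
  have "((\<lambda>x. f x - g x) has_derivative (\<lambda>h. f' h - g' h)) (at x)"
    using has_derivative_diff[OF f' g'] .
  then show ?thesis using pd_hd f' g' by metis
qed

lemma pd_mult: "f differentiable (at x) \<Longrightarrow> g differentiable (at x) \<Longrightarrow>
   pd i (\<lambda>x. f x * g x) x = f x * pd i g x + pd i f x * g x"
proof -
  assume "f differentiable (at x)" "g differentiable (at x)"
  then obtain f' g' where f': "(f has_derivative f') (at x)" and g': "(g has_derivative g') (at x)"
    unfolding differentiable_def by blast
  have "((\<lambda>x. f x * g x) has_derivative (\<lambda>h. f x * g' h + f' h * g x)) (at x)"
    using has_derivative_mult[OF f' g'] .
  then show ?thesis using pd_hd f' g' by metis
qed

lemma Ck_add: "open V \<Longrightarrow> Ck k V f \<Longrightarrow> Ck k V g \<Longrightarrow> Ck k V (\<lambda>x. f x + g x)"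
proof (induction k arbitrary: f g)
  case 0 thus ?case by (auto intro: continuous_on_add)
next
  case (Suc k)
  have d: "\<And>x. x \<in> V \<Longrightarrow> f differentiable (at x) \<and> g differentiable (at x)"
    using Suc.prems diff_on_open by auto
  have "(\<lambda>x. f x + g x) differentiable_on V" using Suc.prems by (auto intro: differentiable_on_add)
  moreover have "Ck k V (pd i (\<lambda>x. f x + g x))" if "i \<in> Basis" for i
  proof (rule Ck_cong[OF Suc.prems(1)])
    show "Ck k V (\<lambda>x. pd i f x + pd i g x)" using Suc that by auto
    show "\<And>y. y \<in> V \<Longrightarrow> pd i f y + pd i g y = pd i (\<lambda>x. f x + g x) y"
      using d pd_add by metis
  qed
  ultimately show ?case by simp
qed

lemma Ck_mult: "open V \<Longrightarrow> Ck k V f \<Longrightarrow> Ck k V g \<Longrightarrow> Ck k V (\<lambda>x. f x * g x)"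
proof (induction k arbitrary: f g)
  case 0 thus ?case by (auto intro: continuous_on_mult)
next
  case (Suc k)
  have d: "\<And>x. x \<in> V \<Longrightarrow> f differentiable (at x) \<and> g differentiable (at x)"
    using Suc.prems diff_on_open by auto
  have "(\<lambda>x. f x * g x) differentiable_on V" using Suc.prems by (auto intro: differentiable_on_mult)
  moreover have "Ck k V (pd i (\<lambda>x. f x * g x))" if "i \<in> Basis" for i
  proof (rule Ck_cong[OF Suc.prems(1)])
    have "Ck k V f" "Ck k V g" using Suc.prems Ck_Suc_imp by blast+
    then show "Ck k V (\<lambda>x. f x * pd i g x + pd i f x * g x)" using Suc that
      by (intro Ck_add) auto
    show "\<And>y. y \<in> V \<Longrightarrow> f y * pd i g y + pd i f y * g y = pd i (\<lambda>x. f x * g x) y"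
      using d pd_mult by metis
  qed
  ultimately show ?case by simp
qed

lemma smooth_add: "open V \<Longrightarrow> smooth V f \<Longrightarrow> smooth V g \<Longrightarrow> smooth V (\<lambda>x. f x + g x)"
  unfolding smooth_def using Ck_add by blast

lemma smooth_mult: "open V \<Longrightarrow> smooth V f \<Longrightarrow> smooth V g \<Longrightarrow> smooth V (\<lambda>x. f x * g x)"
  unfolding smooth_def using Ck_mult by blast

lemma smooth_uminus: "open V \<Longrightarrow> smooth V f \<Longrightarrow> smooth V (\<lambda>x. - f x)"
proof -
  assume "open V" "smooth V f"
  then have "smooth V (\<lambda>x. (-1) * f x)" using smooth_mult smooth_const by blast
  then show ?thesis by simp
qed

lemma smooth_diff': "open V \<Longrightarrow> smooth V f \<Longrightarrow> smooth V g \<Longrightarrow> smooth V (\<lambda>x. f x - g x)"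
proof -
  assume "open V" "smooth V f" "smooth V g"
  then have "smooth V (\<lambda>x. f x + - g x)" using smooth_add smooth_uminus by blast
  then show ?thesis by simp
qed

lemma smooth_sum: "open V \<Longrightarrow> (\<And>j. j \<in> A \<Longrightarrow> smooth V (f j)) \<Longrightarrow> smooth V (\<lambda>x. \<Sum>j\<in>A. f j x)"
proof (induction A rule: infinite_finite_induct)
  case (infinite A) thus ?case by (simp add: smooth_const)
next
  case empty thus ?case by (simp add: smooth_const)
next
  case (insert a A) thus ?case by (simp add: smooth_add)
qed

lemma Ck_sum: "open V \<Longrightarrow> (\<And>j. j \<in> A \<Longrightarrow> Ck k V (f j)) \<Longrightarrow> Ck k V (\<lambda>x. \<Sum>j\<in>A. f j x)"
proof (induction A rule: infinite_finite_induct)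
  case (infinite A) thus ?case by (simp add: Ck_const)
next
  case empty thus ?case by (simp add: Ck_const)
next
  case (insert a A) thus ?case by (simp add: Ck_add)
qed

lemma smooth_linear: "bounded_linear (l :: 'a::euclidean_space \<Rightarrow> real) \<Longrightarrow> smooth V l"
proof -
  assume l: "bounded_linear l"
  have "Ck k V l" for k
  proof (cases k)
    case 0 then show ?thesis using l by (simp add: linear_continuous_on)
  next
    case (Suc k')
    have "pd i l = (\<lambda>x. l i)" for i
      by (rule ext, rule pd_hd, rule bounded_linear_imp_has_derivative[OF l])
    moreover have "l differentiable_on V" using l
      by (simp add: bounded_linear_imp_differentiable_on)
    ultimately show ?thesis using Suc by (simp add: Ck_const)
  qed
  then show ?thesis unfolding smooth_def by blast
qed

lemma smooth_inner: "smooth V (\<lambda>x. x \<bullet> j)"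
  by (rule smooth_linear) (simp add: bounded_linear_inner_left)

lemma pd_chain:
  assumes "f differentiable (at (m z))" "(m has_derivative m') (at z)"
  shows "pd i (\<lambda>z. f (m z)) z = (\<Sum>j\<in>Basis. pd j f (m z) * (m' i \<bullet> j))"
proof -
  let ?F = "frechet_derivative f (at (m z))"
  have F: "(f has_derivative ?F) (at (m z))" using assms(1) frechet_derivative_works by blast
  have lin: "linear ?F" using has_derivative_linear[OF F] .
  have "((\<lambda>z. f (m z)) has_derivative (\<lambda>h. ?F (m' h))) (at z)"
    using has_derivative_compose[OF assms(2) F] .
  then have "pd i (\<lambda>z. f (m z)) z = ?F (m' i)" by (rule pd_hd)
  also have "m' i = (\<Sum>j\<in>Basis. (m' i \<bullet> j) *\<^sub>R j)" by (simp add: euclidean_representation)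
  also have "?F (\<Sum>j\<in>Basis. (m' i \<bullet> j) *\<^sub>R j) = (\<Sum>j\<in>Basis. (m' i \<bullet> j) * ?F j)"
    by (simp add: linear_sum[OF lin] linear_cmul[OF lin])
  finally show ?thesis unfolding pd_def by (simp add: mult.commute)
qed

lemma Ck_comp:
  fixes m :: "'d::euclidean_space \<Rightarrow> 'c::euclidean_space"
  assumes Q: "open Q" and V: "open V" and mO: "m ` Q \<subseteq> V"
    and md: "\<And>z. z \<in> Q \<Longrightarrow> (m has_derivative m' z) (at z)"
    and ms: "\<And>i j. i \<in> Basis \<Longrightarrow> j \<in> Basis \<Longrightarrow> smooth Q (\<lambda>z. m' z i \<bullet> j)"
  shows "Ck k V f \<Longrightarrow> Ck k Q (\<lambda>z. f (m z))"
proof (induction k arbitrary: f)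
  case 0
  have "continuous_on Q m"
    using md has_derivative_continuous continuous_at_imp_continuous_on by blast
  then show ?case using 0 mO by (auto intro: continuous_on_compose2)
next
  case (Suc k)
  have fd: "f differentiable (at (m z))" if "z \<in> Q" for z
    using Suc.prems mO that V diff_on_open by auto
  have "(\<lambda>z. f (m z)) differentiable_on Q"
    unfolding diff_on_open[OF Q]
  proof
    fix z assume z: "z \<in> Q"
    have "m differentiable (at z)" using md[OF z] differentiable_def by blast
    then show "(\<lambda>z. f (m z)) differentiable (at z)"
      using differentiable_chain_at[of m z f] fd[OF z] by (simp add: o_def)
  qed
  moreover have "Ck k Q (pd i (\<lambda>z. f (m z)))" if i: "i \<in> Basis" for i
  proof (rule Ck_cong[OF Q])
    show "Ck k Q (\<lambda>z. \<Sum>j\<in>Basis. pd j f (m z) * (m' z i \<bullet> j))"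
    proof (rule Ck_sum[OF Q])
      fix j :: 'c assume j: "j \<in> Basis"
      have "Ck k Q (\<lambda>z. pd j f (m z))" using Suc j by auto
      moreover have "Ck k Q (\<lambda>z. m' z i \<bullet> j)" using ms[OF i j] unfolding smooth_def by blast
      ultimately show "Ck k Q (\<lambda>z. pd j f (m z) * (m' z i \<bullet> j))" by (rule Ck_mult[OF Q])
    qed
    show "(\<Sum>j\<in>Basis. pd j f (m z) * (m' z i \<bullet> j)) = pd i (\<lambda>z. f (m z)) z" if "z \<in> Q" for z
      using pd_chain[OF fd[OF that] md[OF that]] by simp
  qed
  ultimately show ?case by simp
qed

lemma smooth_comp:
  fixes m :: "'d::euclidean_space \<Rightarrow> 'c::euclidean_space"
  assumes "open Q" "open V" "m ` Q \<subseteq> V"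
    "\<And>z. z \<in> Q \<Longrightarrow> (m has_derivative m' z) (at z)"
    "\<And>i j. i \<in> Basis \<Longrightarrow> j \<in> Basis \<Longrightarrow> smooth Q (\<lambda>z. m' z i \<bullet> j)"
    "smooth V f"
  shows "smooth Q (\<lambda>z. f (m z))"
  using Ck_comp[OF assms(1-5)] assms(6) unfolding smooth_def by blast

lemma smooth_comp_linear:
  fixes m :: "'d::euclidean_space \<Rightarrow> 'c::euclidean_space"
  assumes "open Q" "open V" "m ` Q \<subseteq> V" "bounded_linear m" "smooth V f"
  shows "smooth Q (\<lambda>z. f (m z))"
  by (rule smooth_comp[OF assms(1-3), of "\<lambda>z. m"])
     (auto intro: bounded_linear_imp_has_derivative[OF assms(4)] smooth_const assms(5))

lemma line_deriv:
  assumes "f differentiable (at (a + t *\<^sub>R v))"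
  shows "((\<lambda>t. f (a + t *\<^sub>R v)) has_real_derivative pd v f (a + t *\<^sub>R v)) (at t)"
proof -
  let ?F = "frechet_derivative f (at (a + t *\<^sub>R v))"
  have F: "(f has_derivative ?F) (at (a + t *\<^sub>R v))" using assms frechet_derivative_works by blast
  have lin: "linear ?F" using has_derivative_linear[OF F] .
  have l: "((\<lambda>t. a + t *\<^sub>R v) has_derivative (\<lambda>h. h *\<^sub>R v)) (at t)"
    by (auto intro!: derivative_eq_intros)
  have "((\<lambda>t. f (a + t *\<^sub>R v)) has_derivative (\<lambda>h. ?F (h *\<^sub>R v))) (at t)"
    using has_derivative_compose[OF l F] .
  moreover have "(\<lambda>h. ?F (h *\<^sub>R v)) = (\<lambda>h. pd v f (a + t *\<^sub>R v) * h)"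
    using linear_cmul[OF lin] unfolding pd_def by (auto simp: mult.commute)
  ultimately show ?thesis by (simp add: has_field_derivative_def)
qed

lemma pd_sym:
  fixes f :: "'a::euclidean_space \<Rightarrow> real"
  assumes V: "open V" "x \<in> V" and f: "smooth V f" and ij: "i \<in> Basis" "j \<in> Basis"
  shows "pd i (pd j f) x = pd j (pd i f) x"
proof -
  obtain e where e: "e > 0" "ball x e \<subseteq> V" using V openE by blast
  define d where "d = e / 3"
  have d: "d > 0" using e d_def by auto
  define p where "p s t = x + s *\<^sub>R i + t *\<^sub>R j" for s t
  have ni: "norm i = 1" "norm j = 1" using ij by auto
  have pV: "p s t \<in> V" if "\<bar>s\<bar> \<le> d" "\<bar>t\<bar> \<le> d" for s t
  proof -
    have "norm (s *\<^sub>R i + t *\<^sub>R j) \<le> \<bar>s\<bar> + \<bar>t\<bar>"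
      using norm_triangle_ineq[of "s *\<^sub>R i" "t *\<^sub>R j"] ni by simp
    moreover have "dist x (x + v) = norm v" for v :: 'a by (simp add: dist_norm)
    moreover have "p s t = x + (s *\<^sub>R i + t *\<^sub>R j)" by (simp add: p_def add.assoc)
    ultimately have "dist x (p s t) < e" using that d_def e by auto
    then show ?thesis using e by auto
  qed
  have pe: "p s t = (x + t *\<^sub>R j) + s *\<^sub>R i" for s t by (simp add: p_def algebra_simps)
  have sf: "smooth V (pd j f)" "smooth V (pd i f)" "smooth V (pd i (pd j f))"
    using smooth_pd f ij by blast+
  have df: "g differentiable (at y)" if "smooth V g" "y \<in> V" for g y
    using smooth_diff V(1) that by blast
  have contp: "continuous_on A (\<lambda>(s, t). p s t)" for A
    unfolding p_def by (auto intro!: continuous_intros simp: split_beta)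
  have cij: "continuous_on A (\<lambda>(s,t). pd i (pd j f) (p s t))"
    if "\<And>s t. (s,t) \<in> A \<Longrightarrow> \<bar>s\<bar> \<le> d \<and> \<bar>t\<bar> \<le> d" for A
  proof -
    have "continuous_on A ((pd i (pd j f)) \<circ> (\<lambda>(s, t). p s t))"
      by (rule continuous_on_compose[OF contp continuous_on_subset[OF smooth_cont[OF sf(3)]]])
         (use that pV in auto)
    then show ?thesis by (simp add: o_def split_beta)
  qed
  have ftc: "f (p s t) - f (p s (-d)) = integral {-d..t} (\<lambda>\<tau>. pd j f (p s \<tau>))"
    if s: "\<bar>s\<bar> \<le> d" and t: "t \<in> {-d..d}" for s t
  proof -
    have "((\<lambda>\<tau>. pd j f (p s \<tau>)) has_integral (f (p s t) - f (p s (-d)))) {-d..t}"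
    proof (rule fundamental_theorem_of_calculus)
      show "-d \<le> t" using t by auto
      fix \<tau> assume \<tau>: "\<tau> \<in> {-d..t}"
      then have "p s \<tau> \<in> V" using pV s t by auto
      then have "f differentiable (at ((x + s *\<^sub>R i) + \<tau> *\<^sub>R j))"
        using df[OF f] unfolding p_def by blast
      from line_deriv[OF this]
      have "((\<lambda>\<tau>. f ((x + s *\<^sub>R i) + \<tau> *\<^sub>R j)) has_real_derivative pd j f ((x + s *\<^sub>R i) + \<tau> *\<^sub>R j)) (at \<tau>)" .
      then show "((\<lambda>\<tau>. f (p s \<tau>)) has_vector_derivative pd j f (p s \<tau>)) (at \<tau> within {-d..t})"
        unfolding p_def has_real_derivative_iff_has_vector_derivative
        by (rule has_vector_derivative_at_within)
    qed
    then show ?thesis by (simp add: integral_unique)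
  qed
  have step2: "pd i f (p s0 t) - pd i f (p s0 (-d)) = integral {-d..t} (\<lambda>\<tau>. pd i (pd j f) (p s0 \<tau>))"
    if s0: "s0 \<in> {-d<..<d}" and t: "t \<in> {-d..d}" for s0 t
  proof -
    let ?S = "{-d<..<d}"
    have leib: "((\<lambda>s. integral (cbox (-d) t) (\<lambda>\<tau>. pd j f (p s \<tau>))) has_field_derivative
        integral (cbox (-d) t) (\<lambda>\<tau>. pd i (pd j f) (p s0 \<tau>))) (at s0 within ?S)"
    proof (rule leibniz_rule_field_derivative[where f="\<lambda>s \<tau>. pd j f (p s \<tau>)"])
      fix s \<tau> assume s: "s \<in> ?S" and \<tau>: "\<tau> \<in> cbox (-d) t"
      then have "p s \<tau> \<in> V" using pV t by auto
      then have "pd j f differentiable (at ((x + \<tau> *\<^sub>R j) + s *\<^sub>R i))"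
        using df[OF sf(1)] unfolding pe by blast
      from line_deriv[OF this]
      show "((\<lambda>s. pd j f (p s \<tau>)) has_field_derivative pd i (pd j f) (p s \<tau>)) (at s within ?S)"
        unfolding pe by (rule has_field_derivative_at_within)
    next
      fix s assume s: "s \<in> ?S"
      have "continuous_on (cbox (-d) t) (\<lambda>\<tau>. pd j f (p s \<tau>))"
      proof -
        have "continuous_on (cbox (-d) t) (pd j f \<circ> (\<lambda>\<tau>. p s \<tau>))"
          by (rule continuous_on_compose[OF _ continuous_on_subset[OF smooth_cont[OF sf(1)]]])
             (use s t pV in \<open>auto simp: p_def intro!: continuous_intros\<close>)
        then show ?thesis by (simp add: o_def)
      qed
      then show "(\<lambda>\<tau>. pd j f (p s \<tau>)) integrable_on cbox (-d) t"
        by (rule integrable_continuous)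
    next
      show "continuous_on (?S \<times> cbox (-d) t) (\<lambda>(s, \<tau>). pd i (pd j f) (p s \<tau>))"
        by (rule cij) (use t in auto)
    qed (use s0 in auto)
    have leib': "((\<lambda>s. f (p s t) - f (p s (-d))) has_field_derivative
        integral {-d..t} (\<lambda>\<tau>. pd i (pd j f) (p s0 \<tau>))) (at s0)"
    proof (rule has_field_derivative_transform_within_open[OF _ open_greaterThanLessThan s0])
      show "((\<lambda>s. integral {-d..t} (\<lambda>\<tau>. pd j f (p s \<tau>))) has_field_derivative
        integral {-d..t} (\<lambda>\<tau>. pd i (pd j f) (p s0 \<tau>))) (at s0)"
        using leib s0 by (simp add: at_within_open[OF _ open_greaterThanLessThan])
      show "\<And>s. s \<in> ?S \<Longrightarrow> integral {-d..t} (\<lambda>\<tau>. pd j f (p s \<tau>)) = f (p s t) - f (p s (-d))"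
        using ftc t by auto
    qed
    have dd: "((\<lambda>s. f (p s t')) has_real_derivative pd i f (p s0 t')) (at s0)"
      if t': "\<bar>t'\<bar> \<le> d" for t'
    proof -
      have "p s0 t' \<in> V" using pV s0 t' by auto
      then have "f differentiable (at ((x + t' *\<^sub>R j) + s0 *\<^sub>R i))"
        using df[OF f] unfolding pe by blast
      from line_deriv[OF this]
      show "((\<lambda>s. f (p s t')) has_real_derivative pd i f (p s0 t')) (at s0)"
        unfolding pe .
    qed
    have "((\<lambda>s. f (p s t) - f (p s (-d))) has_field_derivative
        pd i f (p s0 t) - pd i f (p s0 (-d))) (at s0)"
      by (rule DERIV_diff[OF dd dd]) (use t d in auto)
    then show ?thesis using leib' DERIV_unique by blast
  qed
  let ?T = "{-d<..<d}"
  have A: "((\<lambda>t. pd i f (p 0 t) - pd i f (p 0 (-d))) has_real_derivative pd j (pd i f) x) (at 0)"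
  proof -
    have "((\<lambda>t. pd i f (x + t *\<^sub>R j)) has_real_derivative pd j (pd i f) (x + 0 *\<^sub>R j)) (at 0)"
      using line_deriv[of "pd i f" x 0 j] df[OF sf(2) V(2)] by simp
    then have "((\<lambda>t. pd i f (p 0 t)) has_real_derivative pd j (pd i f) x) (at 0)"
      by (simp add: p_def)
    then show ?thesis using DERIV_diff[OF _ DERIV_const] by fastforce
  qed
  have B: "((\<lambda>t. integral {-d..t} (\<lambda>\<tau>. pd i (pd j f) (p 0 \<tau>))) has_real_derivative pd i (pd j f) x) (at 0)"
  proof -
    have c: "continuous_on {-d..d} (\<lambda>\<tau>. pd i (pd j f) (p 0 \<tau>))"
    proof -
      have "continuous_on {-d..d} (pd i (pd j f) \<circ> (\<lambda>\<tau>. p 0 \<tau>))"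
        by (rule continuous_on_compose[OF _ continuous_on_subset[OF smooth_cont[OF sf(3)]]])
           (use pV[of 0] d in \<open>auto simp: p_def intro!: continuous_intros\<close>)
      then show ?thesis by (simp add: o_def)
    qed
    have "((\<lambda>t. integral {-d..t} (\<lambda>\<tau>. pd i (pd j f) (p 0 \<tau>))) has_vector_derivative pd i (pd j f) (p 0 0)) (at 0 within {-d..d})"
      by (rule integral_has_vector_derivative[OF c]) (use d in auto)
    moreover have "at 0 within {-d..d} = at (0::real)"
      by (rule at_within_interior) (use d in auto)
    ultimately show ?thesis by (simp add: has_real_derivative_iff_has_vector_derivative p_def)
  qed
  have "((\<lambda>t. pd i f (p 0 t) - pd i f (p 0 (-d))) has_real_derivative pd i (pd j f) x) (at 0)"
    by (rule has_field_derivative_transform_within_open[OF B open_greaterThanLessThan[of "-d" d]])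
       (use d step2 in auto)
  then show ?thesis using A DERIV_unique by metis
qed

lemma param_integral_deriv:
  fixes g :: "'c::euclidean_space \<times> real \<Rightarrow> real"
  assumes Q: "open Q" and V: "open V" and VQ: "V \<times> {0..1} \<subseteq> Q" and g: "smooth Q g" and x: "x \<in> V"
  shows "((\<lambda>z. integral {0..1} (\<lambda>s. g (z,s))) has_derivative
           (\<lambda>h. integral {0..1} (\<lambda>s. frechet_derivative g (at (x,s)) (h,0)))) (at x)"
proof -
  obtain r where r: "r > 0" "ball x r \<subseteq> V" using V x openE by blast
  let ?U = "ball x r"
  define fx where "fx z s = Blinfun (\<lambda>h. frechet_derivative g (at (z,s)) (h,0))" for z s
  have inQ: "(z,s) \<in> Q" if "z \<in> ?U" "s \<in> {0..1}" for z s using that r VQ by (meson SigmaI subsetD)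
  have gd: "(g has_derivative frechet_derivative g (at w)) (at w)" if "w \<in> Q" for w
    using smooth_diff[OF g Q that] frechet_derivative_works by blast
  have hd: "((\<lambda>z. g (z,s)) has_derivative (\<lambda>h. frechet_derivative g (at (z,s)) (h,0))) (at z)"
    if "(z,s) \<in> Q" for z s
  proof -
    have "((\<lambda>z. (z,s)) has_derivative (\<lambda>h. (h,0))) (at z)"
      by (auto intro!: derivative_eq_intros)
    from has_derivative_compose[OF this gd[OF that]] show ?thesis by simp
  qed
  have fxa: "blinfun_apply (fx z s) = (\<lambda>h. frechet_derivative g (at (z,s)) (h,0))"
    if "(z,s) \<in> Q" for z s
    unfolding fx_def using hd[OF that] by (intro bounded_linear_Blinfun_apply has_derivative_bounded_linear)
  have contg: "continuous_on {0..1} (\<lambda>s. g (z,s))" if "z \<in> ?U" for z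
  proof -
    have "continuous_on {0..1} (g \<circ> (\<lambda>s. (z,s)))"
      by (rule continuous_on_compose[OF _ continuous_on_subset[OF smooth_cont[OF g]]])
         (use inQ that in \<open>auto intro!: continuous_intros\<close>)
    then show ?thesis by (simp add: o_def)
  qed
  have cfx: "continuous_on (?U \<times> cbox 0 1) (\<lambda>(z, s). fx z s)"
  proof (rule continuous_on_blinfun_componentwise)
    fix i :: 'c assume i: "i \<in> Basis"
    have "(i, 0) \<in> (Basis :: ('c \<times> real) set)" using i by (simp add: Basis_prod_def)
    moreover have sub: "?U \<times> cbox 0 1 \<subseteq> Q" using inQ by (auto simp: cbox_interval)
    ultimately have "continuous_on (?U \<times> cbox 0 1) (pd (i,0) g)"
      using continuous_on_subset[OF smooth_cont[OF smooth_pd[OF g]]] by blast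
    then show "continuous_on (?U \<times> cbox 0 1) (\<lambda>w. blinfun_apply ((\<lambda>(z, s). fx z s) w) i)"
      by (rule continuous_on_eq) (use inQ in \<open>auto simp: fxa pd_def cbox_interval\<close>)
  qed
  have L: "((\<lambda>z. integral (cbox 0 1) (\<lambda>s. g (z,s))) has_derivative blinfun_apply (integral (cbox 0 1) (fx x))) (at x within ?U)"
  proof (rule leibniz_rule[where f="\<lambda>z s. g (z,s)"])
    fix z s assume "z \<in> ?U" "s \<in> cbox (0::real) 1"
    then have "(z,s) \<in> Q" using inQ by (auto simp: cbox_interval)
    then show "((\<lambda>z. g (z,s)) has_derivative blinfun_apply (fx z s)) (at z within ?U)"
      using hd fxa has_derivative_at_withinI by metis
  next
    fix z assume "z \<in> ?U"
    then show "(\<lambda>s. g (z,s)) integrable_on cbox 0 1"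
      using contg integrable_continuous_real by (auto simp: cbox_interval)
  next
    show "continuous_on (?U \<times> cbox 0 1) (\<lambda>(z, s). fx z s)" by (rule cfx)
  next
    show "x \<in> ?U" using r(1) by simp
  next
    show "convex ?U" by (rule convex_ball)
  qed
  have eq: "at x within ?U = at x" using r by (intro at_within_open) auto
  from L have L': "((\<lambda>z. integral {0..1} (\<lambda>s. g (z,s))) has_derivative blinfun_apply (integral (cbox 0 1) (fx x))) (at x)"
    unfolding eq cbox_interval .
  have "(fx x) integrable_on cbox 0 1"
  proof (rule integrable_continuous)
    have c1: "continuous_on ({x} \<times> cbox 0 1) (\<lambda>(z, s). fx z s)"
      by (rule continuous_on_subset[OF cfx]) (use r in auto)
    have "continuous_on (cbox 0 1) (Pair x)" by (intro continuous_intros)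
    moreover have "continuous_on (Pair x ` cbox 0 1) (\<lambda>(z,s). fx z s)"
      by (rule continuous_on_subset[OF c1]) auto
    ultimately have "continuous_on (cbox 0 1) ((\<lambda>(z,s). fx z s) \<circ> Pair x)"
      by (rule continuous_on_compose)
    then show "continuous_on (cbox 0 1) (fx x)" by (simp add: o_def)
  qed
  then have "blinfun_apply (integral (cbox 0 1) (fx x)) = (\<lambda>h. integral {0..1} (\<lambda>s. frechet_derivative g (at (x,s)) (h,0)))"
    using inQ r by (auto simp: blinfun_apply_integral fxa cbox_interval intro!: ext integral_cong)
  then show ?thesis using L' by simp
qed

lemma param_integral_smooth:
  fixes g :: "'c::euclidean_space \<times> real \<Rightarrow> real"
  assumes Q: "open Q" and V: "open V" and VQ: "V \<times> {0..1} \<subseteq> Q" and g: "smooth Q g"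
  shows "smooth V (\<lambda>z. integral {0..1} (\<lambda>s. g (z,s)))"
    and "\<And>x i. x \<in> V \<Longrightarrow> pd i (\<lambda>z. integral {0..1} (\<lambda>s. g (z,s))) x = integral {0..1} (\<lambda>s. pd (i,0) g (x,s))"
proof -
  have pdI: "pd i (\<lambda>z. integral {0..1} (\<lambda>s. g (z,s))) x = integral {0..1} (\<lambda>s. pd (i,0) g (x,s))"
    if "x \<in> V" "smooth Q g" for x i g
    using pd_hd[OF param_integral_deriv[OF Q V VQ that(2,1)]] unfolding pd_def by simp
  then show "\<And>x i. x \<in> V \<Longrightarrow> pd i (\<lambda>z. integral {0..1} (\<lambda>s. g (z,s))) x = integral {0..1} (\<lambda>s. pd (i,0) g (x,s))"
    using g by blast
  have "Ck k V (\<lambda>z. integral {0..1} (\<lambda>s. g (z,s)))" if "smooth Q g" for k g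
    using that
  proof (induction k arbitrary: g)
    case 0
    have "(\<lambda>z. integral {0..1} (\<lambda>s. g (z,s))) differentiable_on V"
      unfolding diff_on_open[OF V] differentiable_def
      using param_integral_deriv[OF Q V VQ 0] by blast
    then show ?case by (simp add: differentiable_imp_continuous_on)
  next
    case (Suc k)
    have "(\<lambda>z. integral {0..1} (\<lambda>s. g (z,s))) differentiable_on V"
      unfolding diff_on_open[OF V] differentiable_def
      using param_integral_deriv[OF Q V VQ Suc.prems] by blast
    moreover have "Ck k V (pd i (\<lambda>z. integral {0..1} (\<lambda>s. g (z,s))))" if i: "i \<in> Basis" for i
    proof (rule Ck_cong[OF V])
      have "(i, 0) \<in> (Basis :: ('c \<times> real) set)" using i by (simp add: Basis_prod_def)
      then have "smooth Q (pd (i,0) g)" using smooth_pd Suc.prems by blast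
      then show "Ck k V (\<lambda>z. integral {0..1} (\<lambda>s. pd (i,0) g (z,s)))" using Suc.IH by blast
      show "\<And>y. y \<in> V \<Longrightarrow> integral {0..1} (\<lambda>s. pd (i,0) g (y,s)) = pd i (\<lambda>z. integral {0..1} (\<lambda>s. g (z,s))) y"
        using pdI Suc.prems by simp
    qed
    ultimately show ?case by simp
  qed
  then show "smooth V (\<lambda>z. integral {0..1} (\<lambda>s. g (z,s)))" using g unfolding smooth_def by blast
qed

lemma mv_nth: "(M *v v) $ \<alpha> = (\<Sum>\<beta>\<in>UNIV. M $ \<alpha> $ \<beta> * v $ \<beta>)"
  by (simp add: matrix_vector_mult_def)

lemma pdv_nth: "pdv i f x $ \<alpha> = pd i (\<lambda>y. f y $ \<alpha>) x" by (simp add: pdv_def)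

lemma Dconn_nth: "Dconn G \<eta> x a $ \<alpha> = pd a (\<lambda>y. \<eta> y $ \<alpha>) x + (\<Sum>\<beta>\<in>UNIV. G x a $ \<alpha> $ \<beta> * \<eta> x $ \<beta>)"
  by (simp add: Dconn_def pdv_nth mv_nth)

lemma Dwedge_nth: "Dwedge G \<phi> x a b $ \<alpha> =
   ((pd a (\<lambda>y. \<phi> y b $ \<alpha>) x + (\<Sum>\<beta>\<in>UNIV. G x a $ \<alpha> $ \<beta> * \<phi> x b $ \<beta>)) -
    (pd b (\<lambda>y. \<phi> y a $ \<alpha>) x + (\<Sum>\<beta>\<in>UNIV. G x b $ \<alpha> $ \<beta> * \<phi> x a $ \<beta>))) / 2"
  by (simp add: Dwedge_def pdv_nth mv_nth)

lemma pd_sum: "finite A \<Longrightarrow> (\<And>j. j \<in> A \<Longrightarrow> f j differentiable (at x)) \<Longrightarrow>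
  pd i (\<lambda>x. \<Sum>j\<in>A. f j x) x = (\<Sum>j\<in>A. pd i (f j) x)"
proof (induction A rule: finite_induct)
  case empty thus ?case by (simp add: pd_const)
next
  case (insert a A)
  have "(\<lambda>x. \<Sum>j\<in>A. f j x) differentiable (at x)"
    using insert by (intro differentiable_sum) auto
  then show ?case using insert pd_add[of "f a" x "\<lambda>x. \<Sum>j\<in>A. f j x" i] by simp
qed

definition vdiff :: "('a::real_normed_vector \<Rightarrow> real^'k) \<Rightarrow> 'a \<Rightarrow> bool" where
  "vdiff f x = (\<forall>\<alpha>. (\<lambda>y. f y $ \<alpha>) differentiable (at x))"

lemma smooth_sec_vdiff: "smooth_sec W \<eta> \<Longrightarrow> open W \<Longrightarrow> x \<in> W \<Longrightarrow> vdiff \<eta> x"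
  unfolding smooth_sec_def vdiff_def using smooth_diff by blast

lemma Dconn_diff: "vdiff \<eta>1 x \<Longrightarrow> vdiff \<eta>2 x \<Longrightarrow>
   Dconn G (\<lambda>y. \<eta>1 y - \<eta>2 y) x a = Dconn G \<eta>1 x a - Dconn G \<eta>2 x a"
  unfolding vec_eq_iff vdiff_def
  by (simp add: Dconn_nth pd_diff algebra_simps sum_subtractf)

lemma Dconn_add: "vdiff \<eta>1 x \<Longrightarrow> vdiff \<eta>2 x \<Longrightarrow>
   Dconn G (\<lambda>y. \<eta>1 y + \<eta>2 y) x a = Dconn G \<eta>1 x a + Dconn G \<eta>2 x a"
  unfolding vec_eq_iff vdiff_def
  by (simp add: Dconn_nth pd_add algebra_simps sum.distrib)

lemma Dwedge_diff: "vdiff (\<lambda>y. \<phi>1 y a) x \<Longrightarrow> vdiff (\<lambda>y. \<phi>1 y b) x \<Longrightarrow>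
   vdiff (\<lambda>y. \<phi>2 y a) x \<Longrightarrow> vdiff (\<lambda>y. \<phi>2 y b) x \<Longrightarrow>
   Dwedge G (\<lambda>y c. \<phi>1 y c - \<phi>2 y c) x a b = Dwedge G \<phi>1 x a b - Dwedge G \<phi>2 x a b"
  unfolding vec_eq_iff vdiff_def
  by (simp add: Dwedge_nth pd_diff sum_subtractf right_diff_distrib left_diff_distrib field_simps)

lemma Dwedge_local: "open W \<Longrightarrow> x \<in> W \<Longrightarrow> (\<And>y. y \<in> W \<Longrightarrow> \<phi>1 y a = \<phi>2 y a) \<Longrightarrow>
   (\<And>y. y \<in> W \<Longrightarrow> \<phi>1 y b = \<phi>2 y b) \<Longrightarrow>
   Dwedge G \<phi>1 x a b = Dwedge G \<phi>2 x a b"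
proof -
  assume W: "open W" "x \<in> W" and ea: "\<And>y. y \<in> W \<Longrightarrow> \<phi>1 y a = \<phi>2 y a"
    and eb: "\<And>y. y \<in> W \<Longrightarrow> \<phi>1 y b = \<phi>2 y b"
  have "pd c (\<lambda>y. \<phi>1 y a $ \<alpha>) x = pd c (\<lambda>y. \<phi>2 y a $ \<alpha>) x" for c \<alpha>
    by (rule pd_local[OF W]) (simp add: ea)
  moreover have "pd c (\<lambda>y. \<phi>1 y b $ \<alpha>) x = pd c (\<lambda>y. \<phi>2 y b $ \<alpha>) x" for c \<alpha>
    by (rule pd_local[OF W]) (simp add: eb)
  ultimately show ?thesis unfolding vec_eq_iff Dwedge_nth using ea[OF W(2)] eb[OF W(2)] by simp
qed

lemma smooth_Dconn:
  assumes W: "open W" and c: "c \<in> Basis" and \<eta>: "smooth_sec W \<eta>"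
    and G: "\<And>\<alpha> \<beta>. smooth W (\<lambda>z. G z c $ \<alpha> $ \<beta>)"
  shows "smooth W (\<lambda>z. Dconn G \<eta> z c $ \<alpha>)"
proof -
  have "smooth W (\<lambda>z. pd c (\<lambda>y. \<eta> y $ \<alpha>) z + (\<Sum>\<beta>\<in>UNIV. G z c $ \<alpha> $ \<beta> * \<eta> z $ \<beta>))"
    using \<eta> G c unfolding smooth_sec_def
    by (intro smooth_add[OF W] smooth_sum[OF W] smooth_mult[OF W] smooth_pd) auto
  then show ?thesis by (simp add: Dconn_nth)
qed

lemma smooth_secI: "(\<And>\<alpha>. smooth W (\<lambda>x. \<eta> x $ \<alpha>)) \<Longrightarrow> smooth_sec W \<eta>"
  by (simp add: smooth_sec_def)

lemma smooth_secD: "smooth_sec W \<eta> \<Longrightarrow> smooth W (\<lambda>x. \<eta> x $ \<alpha>)"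
  by (simp add: smooth_sec_def)

lemma smooth_sec_subset: "smooth_sec W \<eta> \<Longrightarrow> W' \<subseteq> W \<Longrightarrow> smooth_sec W' \<eta>"
  by (auto simp: smooth_sec_def intro: smooth_subset)

lemma smooth_formD: "smooth_form W \<phi> \<Longrightarrow> a \<in> Basis \<Longrightarrow> smooth W (\<lambda>x. \<phi> x a $ \<alpha>)"
  by (simp add: smooth_form_def smooth_sec_def)

lemma smooth_vdiff: "smooth W f \<Longrightarrow> open W \<Longrightarrow> x \<in> W \<Longrightarrow> f differentiable (at x)"
  using smooth_diff by blast

lemma kappa_diff:
  assumes W: "open W" "x \<in> W" and \<psi>1: "smooth_sec W \<psi>1" and \<psi>2: "smooth_sec W \<psi>2"
    and G: "\<And>c \<alpha> \<beta>. c \<in> Basis \<Longrightarrow> smooth W (\<lambda>z. G z c $ \<alpha> $ \<beta>)"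
    and ab: "a \<in> Basis" "b \<in> Basis"
  shows "kappa G (\<lambda>y. \<psi>1 y - \<psi>2 y) x a b = kappa G \<psi>1 x a b - kappa G \<psi>2 x a b"
proof -
  have "kappa G (\<lambda>y. \<psi>1 y - \<psi>2 y) x a b = Dwedge G (\<lambda>y c. Dconn G \<psi>1 y c - Dconn G \<psi>2 y c) x a b"
    unfolding kappa_def
    by (rule Dwedge_local[OF W])
       (auto intro!: Dconn_diff smooth_sec_vdiff[OF \<psi>1 W(1)] smooth_sec_vdiff[OF \<psi>2 W(1)])
  also have "\<dots> = kappa G \<psi>1 x a b - kappa G \<psi>2 x a b"
    unfolding kappa_def
    by (rule Dwedge_diff)
       (use smooth_Dconn[OF W(1) _ \<psi>1 G] smooth_Dconn[OF W(1) _ \<psi>2 G] smooth_diff[OF _ W(1,2)] ab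
        in \<open>auto simp: vdiff_def\<close>)
  finally show ?thesis .
qed

lemma prod_basis_cases:
  fixes c :: "'a::euclidean_space \<times> 'b::euclidean_space"
  assumes "c \<in> Basis"
  obtains a where "a \<in> Basis" "c = (a,0)" | v where "v \<in> Basis" "c = (0,v)"
  using assms by (auto simp: Basis_prod_def)

lemma hbasis: "a \<in> Basis \<Longrightarrow> ((a,0)::'a::euclidean_space\<times>'b::euclidean_space) \<in> Basis"
  by (simp add: Basis_prod_def)

lemma vbasis: "v \<in> Basis \<Longrightarrow> ((0,v)::'a::euclidean_space\<times>'b::euclidean_space) \<in> Basis"
  by (simp add: Basis_prod_def)

lemma zero_notin_Basis: "(0::'a::euclidean_space) \<notin> Basis"
  using nonzero_Basis by blast

lemma pull_fst_h[simp]: "a \<in> Basis \<Longrightarrow> pull_fst \<Gamma> z (a,0) = \<Gamma> (fst z) a"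
  by (simp add: pull_fst_def)

lemma pull_fst_v[simp]: "pull_fst \<Gamma> z (0,v) = 0"
  by (simp add: pull_fst_def zero_notin_Basis)

lemma pd_chain_fd:
  assumes "f differentiable (at (m z))" "(m has_derivative m') (at z)"
  shows "pd i (\<lambda>z. f (m z)) z = frechet_derivative f (at (m z)) (m' i)"
proof -
  have F: "(f has_derivative frechet_derivative f (at (m z))) (at (m z))"
    using assms(1) frechet_derivative_works by blast
  show ?thesis using pd_hd[OF has_derivative_compose[OF assms(2) F]] .
qed

lemma pd_fst_gen:
  fixes f :: "'a::euclidean_space \<Rightarrow> real"
  assumes "f differentiable (at (fst z))"
  shows "pd c (\<lambda>z::'a\<times>'b::euclidean_space. f (fst z)) z = frechet_derivative f (at (fst z)) (fst c)"
  using pd_chain_fd[OF assms bounded_linear_imp_has_derivative[OF bounded_linear_fst]] .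

lemma pd_fst_h:
  fixes f :: "'a::euclidean_space \<Rightarrow> real"
  assumes "f differentiable (at (fst z))"
  shows "pd (a,0) (\<lambda>z::'a\<times>'b::euclidean_space. f (fst z)) z = pd a f (fst z)"
  using pd_fst_gen[OF assms] unfolding pd_def by simp

lemma pd_fst_v:
  fixes f :: "'a::euclidean_space \<Rightarrow> real"
  assumes "f differentiable (at (fst z))"
  shows "pd (0,v) (\<lambda>z::'a\<times>'b::euclidean_space. f (fst z)) z = 0"
proof -
  have "linear (frechet_derivative f (at (fst z)))"
    using assms frechet_derivative_works has_derivative_linear by blast
  then show ?thesis using pd_fst_gen[OF assms, of "(0,v)"] by (simp add: linear_0)
qed

lemma pd_slice:
  fixes f :: "'a::euclidean_space \<times> 'b::euclidean_space \<Rightarrow> real"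
  assumes "f differentiable (at (x,y0))"
  shows "pd a (\<lambda>x. f (x,y0)) x = pd (a,0) f (x,y0)"
proof -
  have "((\<lambda>x. (x,y0)) has_derivative (\<lambda>h. (h,0))) (at x)"
    by (auto intro!: derivative_eq_intros)
  from pd_chain_fd[OF _ this, of f] assms show ?thesis unfolding pd_def by simp
qed

lemma fd_vert:
  fixes f :: "'a::euclidean_space \<times> 'b::euclidean_space \<Rightarrow> real"
  assumes "f differentiable (at p)"
  shows "frechet_derivative f (at p) (0,u) = (\<Sum>v\<in>Basis. (u \<bullet> v) * pd (0,v) f p)"
proof -
  let ?F = "frechet_derivative f (at p)"
  have lin: "linear ?F" using assms frechet_derivative_works has_derivative_linear by blast
  have "((0::'a), u) = (\<Sum>v\<in>Basis. (u \<bullet> v) *\<^sub>R ((0::'a), v))"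
    by (simp add: prod_eq_iff fst_sum snd_sum euclidean_representation)
  then have "?F (0,u) = ?F (\<Sum>v\<in>Basis. (u \<bullet> v) *\<^sub>R ((0::'a), v))" by simp
  also have "\<dots> = (\<Sum>v\<in>Basis. (u \<bullet> v) * ?F (0, v))"
    by (simp only: linear_sum[OF lin] linear_cmul[OF lin] real_scaleR_def)
  finally show ?thesis unfolding pd_def .
qed

lemma smooth_fst:
  fixes f :: "'a::euclidean_space \<Rightarrow> real"
  assumes "smooth U f" "open U" "open W" "fst ` W \<subseteq> U"
  shows "smooth W (\<lambda>z::'a\<times>'b::euclidean_space. f (fst z))"
  by (rule smooth_comp_linear[OF assms(3,2,4) bounded_linear_fst assms(1)])

lemma smooth_slice:
  fixes f :: "'a::euclidean_space \<times> 'b::euclidean_space \<Rightarrow> real"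
  assumes "smooth W f" "open W" "open B" "(\<lambda>x. (x,y0)) ` B \<subseteq> W"
  shows "smooth B (\<lambda>x. f (x,y0))"
proof (rule smooth_comp[OF assms(3,2,4), of "\<lambda>z h. (h,0)"])
  show "((\<lambda>x. (x, y0)) has_derivative (\<lambda>h. (h, 0))) (at z)" for z
    by (auto intro!: derivative_eq_intros)
qed (auto intro: smooth_const assms(1))

lemma pull_fst_smooth_conn:
  fixes \<Gamma> :: "'a::euclidean_space \<Rightarrow> 'a \<Rightarrow> real^'k^'k"
  assumes "open U" "open W" "fst ` W \<subseteq> U" "smooth_connection U \<Gamma>"
  shows "smooth_connection W (pull_fst \<Gamma> :: 'a \<times> 'b::euclidean_space \<Rightarrow> _)"
  unfolding smooth_connection_def
proof (intro ballI allI)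
  fix c :: "'a \<times> 'b" and \<alpha> \<beta> assume c: "c \<in> Basis"
  then show "smooth W (\<lambda>x. pull_fst \<Gamma> x c $ \<alpha> $ \<beta>)"
  proof (cases rule: prod_basis_cases)
    case (1 a)
    then show ?thesis using assms smooth_fst[of U "\<lambda>x. \<Gamma> x a $ \<alpha> $ \<beta>" W]
      by (simp add: smooth_connection_def)
  next
    case (2 v) then show ?thesis by (simp add: smooth_const)
  qed
qed

lemma pdm_nth: "pdm i f x $ \<alpha> $ \<beta> = pd i (\<lambda>y. f y $ \<alpha> $ \<beta>) x"
  by (simp add: pdm_def)

lemma curv_antisym: "curv G x b a = - curv G x a b"
  by (simp add: curv_def algebra_simps)

lemma curv_pull_h:
  fixes \<Gamma> :: "'a::euclidean_space \<Rightarrow> 'a \<Rightarrow> real^'k^'k"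
  assumes "a \<in> Basis" "b \<in> Basis"
    and d: "\<And>c \<alpha> \<beta>. c \<in> Basis \<Longrightarrow> (\<lambda>x. \<Gamma> x c $ \<alpha> $ \<beta>) differentiable (at (fst z))"
  shows "curv (pull_fst \<Gamma> :: 'a \<times> 'b::euclidean_space \<Rightarrow> _) z (a,0) (b,0) = curv \<Gamma> (fst z) a b"
proof -
  have "pd (c,0) (\<lambda>y. \<Gamma> (fst y) e $ \<alpha> $ \<beta>) z = pd c (\<lambda>y. \<Gamma> y e $ \<alpha> $ \<beta>) (fst z)"
    if "e \<in> Basis" for c e \<alpha> \<beta>
    using pd_fst_h[of "\<lambda>x. \<Gamma> x e $ \<alpha> $ \<beta>" z c] d that by simp
  then have "pdm (a,0) (\<lambda>y. pull_fst \<Gamma> y (b,0)) z = pdm a (\<lambda>y. \<Gamma> y b) (fst z)"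
       "pdm (b,0) (\<lambda>y. pull_fst \<Gamma> y (a,0)) z = pdm b (\<lambda>y. \<Gamma> y a) (fst z)"
    using assms by (simp_all add: vec_eq_iff pdm_nth)
  then show ?thesis using assms by (simp add: curv_def)
qed

lemma curv_pull_v:
  fixes \<Gamma> :: "'a::euclidean_space \<Rightarrow> 'a \<Rightarrow> real^'k^'k"
  assumes "d \<in> Basis"
    and dd: "\<And>c \<alpha> \<beta>. c \<in> Basis \<Longrightarrow> (\<lambda>x. \<Gamma> x c $ \<alpha> $ \<beta>) differentiable (at (fst z))"
  shows "curv (pull_fst \<Gamma> :: 'a \<times> 'b::euclidean_space \<Rightarrow> _) z (0,v) d = 0"
proof -
  have "pdm d (\<lambda>y. pull_fst \<Gamma> y (0,v)) z = 0"
    by (simp add: vec_eq_iff pdm_nth pd_const)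
  moreover have "pdm (0,v) (\<lambda>y. pull_fst \<Gamma> y d) z = 0"
    using assms(1)
  proof (cases rule: prod_basis_cases)
    case (1 a)
    have "pd (0,v) (\<lambda>y. \<Gamma> (fst y) a $ \<alpha> $ \<beta>) z = 0" for \<alpha> \<beta>
      using pd_fst_v[of "\<lambda>x. \<Gamma> x a $ \<alpha> $ \<beta>" z v] dd 1 by simp
    then show ?thesis using 1 by (simp add: vec_eq_iff pdm_nth)
  next
    case (2 w) then show ?thesis by (simp add: vec_eq_iff pdm_nth pd_const)
  qed
  ultimately show ?thesis by (simp add: curv_def)
qed

lemma curv_rank_pull:
  fixes \<Gamma> :: "'a::euclidean_space \<Rightarrow> 'a \<Rightarrow> real^'k^'k"
  assumes dd: "\<And>c \<alpha> \<beta>. c \<in> Basis \<Longrightarrow> (\<lambda>x. \<Gamma> x c $ \<alpha> $ \<beta>) differentiable (at (fst z))"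
  shows "curv_rank (pull_fst \<Gamma> :: 'a \<times> 'b::euclidean_space \<Rightarrow> _) z = curv_rank \<Gamma> (fst z)"
proof -
  let ?P = "pull_fst \<Gamma> :: 'a \<times> 'b::euclidean_space \<Rightarrow> _"
  have "{v::real^'k. \<forall>c\<in>Basis. \<forall>d\<in>Basis. curv ?P z c d *v v = 0} =
        {v::real^'k. \<forall>a\<in>Basis. \<forall>b\<in>Basis. curv \<Gamma> (fst z) a b *v v = 0}"
  proof (intro Collect_cong iffI ballI)
    fix v :: "real^'k" and a b :: 'a
    assume H: "\<forall>c\<in>Basis. \<forall>d\<in>Basis. curv ?P z c d *v v = 0" and a: "a \<in> Basis" and b: "b \<in> Basis"
    have "curv ?P z (a,0) (b,0) *v v = 0" using H hbasis[OF a] hbasis[OF b] by blast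
    then show "curv \<Gamma> (fst z) a b *v v = 0"
      using curv_pull_h[OF a b dd] by simp
  next
    fix v :: "real^'k" and c d :: "'a \<times> 'b"
    assume H: "\<forall>a\<in>Basis. \<forall>b\<in>Basis. curv \<Gamma> (fst z) a b *v v = 0" and c: "c \<in> Basis" and d: "d \<in> Basis"
    from c show "curv ?P z c d *v v = 0"
    proof (cases rule: prod_basis_cases)
      case (1 a)
      from d show ?thesis
      proof (cases rule: prod_basis_cases)
        case (1 b)
        have "curv \<Gamma> (fst z) a b *v v = 0" using H \<open>a \<in> Basis\<close> \<open>b \<in> Basis\<close> by blast
        then show ?thesis using curv_pull_h[OF \<open>a \<in> Basis\<close> \<open>b \<in> Basis\<close> dd] \<open>c = (a,0)\<close> \<open>d = (b,0)\<close> by simp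
      next
        case (2 w)
        have "curv ?P z c d = - curv ?P z d c" by (rule curv_antisym)
        also have "curv ?P z d c = 0" using 2 curv_pull_v[OF c dd] by simp
        finally show ?thesis by simp
      qed
    next
      case (2 w) then show ?thesis using curv_pull_v[OF d dd] by simp
    qed
  qed
  then show ?thesis unfolding curv_rank_def by simp
qed

lemma vert_primitive:
  fixes F :: "'b::euclidean_space \<Rightarrow> 'a::euclidean_space \<times> 'b \<Rightarrow> real"
  assumes V: "open V" and B1: "open B1" and W0V: "B1 \<times> ball y0 r \<subseteq> V"
    and sF: "\<And>v. v \<in> Basis \<Longrightarrow> smooth V (F v)"
    and closed: "\<And>z v w. z \<in> V \<Longrightarrow> v \<in> Basis \<Longrightarrow> w \<in> Basis \<Longrightarrow> pd (0,v) (F w) z = pd (0,w) (F v) z"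
  defines "H \<equiv> (\<lambda>z. integral {0..1} (\<lambda>s. \<Sum>v\<in>Basis. F v (fst z, y0 + s *\<^sub>R (snd z - y0)) * ((snd z - y0) \<bullet> v)))"
  shows "smooth (B1 \<times> ball y0 r) H"
    and "\<And>z w. z \<in> B1 \<times> ball y0 r \<Longrightarrow> w \<in> Basis \<Longrightarrow> pd (0,w) H z = F w z"
proof -
  let ?W0 = "B1 \<times> ball y0 r"
  have W0: "open ?W0" using B1 by (simp add: open_Times)
  define m where "m w = (fst (fst w), y0 + snd w *\<^sub>R (snd (fst w) - y0))" for w :: "('a \<times> 'b) \<times> real"
  define g where "g w = (\<Sum>v\<in>Basis. F v (m w) * ((snd (fst w) - y0) \<bullet> v))" for w
  define m' where "m' w h = (fst (fst h), snd h *\<^sub>R (snd (fst w) - y0) + snd w *\<^sub>R snd (fst h))"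
    for w h :: "('a \<times> 'b) \<times> real"
  define Q where "Q = m -` V"
  have Hg: "H = (\<lambda>z. integral {0..1} (\<lambda>s. g (z,s)))"
    unfolding H_def g_def m_def by simp
  have md: "(m has_derivative m' w) (at w)" for w
    unfolding m_def m'_def
    by (auto intro!: derivative_eq_intros simp: algebra_simps)
  have mc: "continuous_on UNIV m"
    unfolding m_def by (intro continuous_intros)
  have Q: "open Q" unfolding Q_def by (rule continuous_imp_open_vimage[OF mc]) (use V in auto)
  have W0Q: "?W0 \<times> {0..1} \<subseteq> Q"
  proof (clarsimp simp: Q_def)
    fix x :: 'a and y :: 'b and s :: real assume x: "x \<in> B1" and y: "dist y0 y < r" and s: "0 \<le> s" "s \<le> 1"
    have "dist y0 (y0 + s *\<^sub>R (y - y0)) = s * norm (y - y0)"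
      using s by (simp add: dist_norm)
    also have "\<dots> \<le> norm (y - y0)" using s by (simp add: mult_left_le_one_le)
    also have "\<dots> < r" using y by (simp add: dist_norm norm_minus_commute)
    finally have "(x, y0 + s *\<^sub>R (y - y0)) \<in> ?W0" using x by simp
    then show "m ((x, y), s) \<in> V" using W0V unfolding m_def by auto
  qed
  have mQ: "m ` Q \<subseteq> V" unfolding Q_def by auto
  have ms: "smooth Q (\<lambda>w. m' w i \<bullet> j)" for i j
  proof -
    have e: "(\<lambda>w. m' w i \<bullet> j) = (\<lambda>w. fst (fst i) \<bullet> fst j + (snd i * (snd (fst w) \<bullet> snd j - y0 \<bullet> snd j) + snd w * (snd (fst i) \<bullet> snd j)))"
      unfolding m'_def by (rule ext) (simp add: inner_prod_def inner_add_left inner_diff_left inner_diff_right algebra_simps)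
    have l1: "bounded_linear (\<lambda>w::('a \<times> 'b) \<times> real. snd (fst w) \<bullet> snd j)"
      by (intro bounded_linear_compose[OF bounded_linear_inner_left]
            bounded_linear_compose[OF bounded_linear_snd] bounded_linear_fst)
    have l2: "bounded_linear (\<lambda>w::('a \<times> 'b) \<times> real. snd w)" by (rule bounded_linear_snd)
    show ?thesis unfolding e
      by (intro smooth_add[OF Q] smooth_mult[OF Q] smooth_diff'[OF Q] smooth_const
            smooth_linear[OF l1] smooth_linear[OF l2])
  qed
  have sFm: "smooth Q (\<lambda>w. F v (m w))" if "v \<in> Basis" for v
    by (rule smooth_comp[OF Q V mQ md ms sF[OF that]])
  have laff: "bounded_linear (\<lambda>w::('a \<times> 'b) \<times> real. snd (fst w) \<bullet> v)" for v
    by (intro bounded_linear_compose[OF bounded_linear_inner_left]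
          bounded_linear_compose[OF bounded_linear_snd] bounded_linear_fst)
  have saff: "smooth Q (\<lambda>w. (snd (fst w) - y0) \<bullet> v)" for v
  proof -
    have "smooth Q (\<lambda>w. snd (fst w) \<bullet> v - y0 \<bullet> v)"
      by (intro smooth_diff'[OF Q] smooth_linear[OF laff] smooth_const)
    then show ?thesis by (simp add: inner_diff_left)
  qed
  have sg: "smooth Q g"
    unfolding g_def by (intro smooth_sum[OF Q] smooth_mult[OF Q] sFm saff)
  note PI = param_integral_smooth[OF Q W0 W0Q sg]
  show "smooth ?W0 H" unfolding Hg by (rule PI(1))
  fix z :: "'a \<times> 'b" and w :: 'b assume z: "z \<in> ?W0" and w: "w \<in> Basis"
  have Fd: "F v differentiable (at q)" if "q \<in> V" "v \<in> Basis" for v q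
    using smooth_diff[OF sF[OF that(2)] V that(1)] .
  have gen: "(\<Sum>v\<in>Basis. A v + s * B v * c v) = (\<Sum>v\<in>Basis. A v) + s * (\<Sum>v\<in>Basis. c v * B v)"
    for A B c :: "'b \<Rightarrow> real" and s :: real
    by (simp add: sum.distrib sum_distrib_left mult_ac)
  have key: "pd ((0,w),0) g (z,s) = F w (m (z,s)) + s * pd (0, snd z - y0) (F w) (m (z,s))"
    if s: "s \<in> {0..1}" for s
  proof -
    let ?p = "(z,s)"
    have pQ: "?p \<in> Q" using W0Q z s by (meson SigmaI subsetD)
    then have mpV: "m ?p \<in> V" unfolding Q_def by simp
    have d1: "(\<lambda>w. F v (m w)) differentiable (at ?p)" if "v \<in> Basis" for v
      using smooth_diff[OF sFm[OF that] Q pQ] .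
    have d2: "(\<lambda>w. (snd (fst w) - y0) \<bullet> v) differentiable (at ?p)" for v
      using smooth_diff[OF saff Q pQ] .
    have pdaff: "pd ((0,w),0) (\<lambda>w. (snd (fst w) - y0) \<bullet> v) ?p = w \<bullet> v" for v
    proof -
      have "((\<lambda>w. (snd (fst w) - y0) \<bullet> v) has_derivative (\<lambda>h. snd (fst h) \<bullet> v)) (at ?p)"
        by (auto intro!: derivative_eq_intros simp: inner_diff_left)
      from pd_hd[OF this] show ?thesis by simp
    qed
    have pdFm: "pd ((0,w),0) (\<lambda>w. F v (m w)) ?p = s * pd (0,w) (F v) (m ?p)" if v: "v \<in> Basis" for v
    proof -
      have "pd ((0,w),0) (\<lambda>w. F v (m w)) ?p = frechet_derivative (F v) (at (m ?p)) (m' ?p ((0,w),0))"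
        by (rule pd_chain_fd[OF Fd[OF mpV v] md])
      also have "m' ?p ((0,w),0) = s *\<^sub>R (0,w)" unfolding m'_def by simp
      also have "frechet_derivative (F v) (at (m ?p)) (s *\<^sub>R (0,w)) = s * pd (0,w) (F v) (m ?p)"
      proof -
        have lin: "linear (frechet_derivative (F v) (at (m ?p)))"
          using Fd[OF mpV v] frechet_derivative_works has_derivative_linear by blast
        show ?thesis unfolding pd_def linear_cmul[OF lin] real_scaleR_def by (rule refl)
      qed
      finally show ?thesis .
    qed
    have "pd ((0,w),0) g ?p = (\<Sum>v\<in>Basis. pd ((0,w),0) (\<lambda>w. F v (m w) * ((snd (fst w) - y0) \<bullet> v)) ?p)"
      unfolding g_def
      by (rule pd_sum) (auto intro!: differentiable_mult d1 d2)
    also have "\<dots> = (\<Sum>v\<in>Basis. F v (m ?p) * (w \<bullet> v) + s * pd (0,w) (F v) (m ?p) * ((snd z - y0) \<bullet> v))"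
      by (rule sum.cong) (auto simp: pd_mult[OF d1 d2] pdaff pdFm)
    also have "\<dots> = (\<Sum>v\<in>Basis. F v (m ?p) * (w \<bullet> v)) + s * (\<Sum>v\<in>Basis. ((snd z - y0) \<bullet> v) * pd (0,w) (F v) (m ?p))"
      by (rule gen)
    also have "(\<Sum>v\<in>Basis. ((snd z - y0) \<bullet> v) * pd (0,w) (F v) (m ?p)) = (\<Sum>v\<in>Basis. ((snd z - y0) \<bullet> v) * pd (0,v) (F w) (m ?p))"
      by (rule sum.cong) (auto simp: closed[OF mpV _ w])
    also have "(\<Sum>v\<in>Basis. F v (m ?p) * (w \<bullet> v)) = (\<Sum>v\<in>Basis. if v = w then F v (m ?p) else 0)"
      by (rule sum.cong) (auto simp: inner_Basis w)
    also have "\<dots> = F w (m ?p)" using w by simp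
    also have "(\<Sum>v\<in>Basis. ((snd z - y0) \<bullet> v) * pd (0,v) (F w) (m ?p)) = pd (0, snd z - y0) (F w) (m ?p)"
      unfolding pd_def using fd_vert[OF Fd[OF mpV w], of "snd z - y0"] by (simp add: pd_def)
    finally show ?thesis by simp
  qed
  have mline: "m (z,s) = (fst z, y0) + s *\<^sub>R (0, snd z - y0)" for s
    unfolding m_def by simp
  have kd: "((\<lambda>s. s * F w (m (z,s))) has_vector_derivative (F w (m (z,s)) + s * pd (0, snd z - y0) (F w) (m (z,s))))
      (at s within {0..1})" if s: "s \<in> {0..1}" for s
  proof -
    have "(z, s) \<in> Q" using W0Q z s by (meson SigmaI subsetD)
    then have mpV: "m (z,s) \<in> V" unfolding Q_def by simp
    have "F w differentiable (at ((fst z, y0) + s *\<^sub>R (0, snd z - y0)))"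
      using Fd[OF mpV w] unfolding mline .
    from line_deriv[OF this]
    have "((\<lambda>s. F w (m (z,s))) has_real_derivative pd (0, snd z - y0) (F w) (m (z,s))) (at s)"
      unfolding mline .
    from DERIV_mult[OF DERIV_ident this]
    have "((\<lambda>s. s * F w (m (z,s))) has_real_derivative (F w (m (z,s)) + s * pd (0, snd z - y0) (F w) (m (z,s)))) (at s)"
      by (simp add: mult.commute)
    then show ?thesis
      unfolding has_real_derivative_iff_has_vector_derivative
      by (rule has_vector_derivative_at_within)
  qed
  have "((\<lambda>s. F w (m (z,s)) + s * pd (0, snd z - y0) (F w) (m (z,s))) has_integral
          (1 * F w (m (z,1)) - 0 * F w (m (z,0)))) {0..1}"
    by (rule fundamental_theorem_of_calculus[OF _ kd]) auto
  moreover have "m (z,1) = z" unfolding m_def by simp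
  ultimately have I: "((\<lambda>s. F w (m (z,s)) + s * pd (0, snd z - y0) (F w) (m (z,s))) has_integral F w z) {0..1}"
    by simp
  have "pd (0,w) H z = integral {0..1} (\<lambda>s. pd ((0,w),0) g (z,s))"
    unfolding Hg by (rule PI(2)[OF z])
  also have "\<dots> = integral {0..1} (\<lambda>s. F w (m (z,s)) + s * pd (0, snd z - y0) (F w) (m (z,s)))"
    by (rule integral_cong) (use key in auto)
  also have "\<dots> = F w z" using I by (rule integral_unique)
  finally show "pd (0,w) H z = F w z" .
qed

lemma pd_slice_nth:
  fixes \<phi> :: "'a::euclidean_space \<times> 'b::euclidean_space \<Rightarrow> real^'k"
  assumes "vdiff \<phi> (x,y0)"
  shows "pd c (\<lambda>y. \<phi> (y,y0) $ \<alpha>) x = pd (c,0) (\<lambda>z. \<phi> z $ \<alpha>) (x,y0)"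
  using pd_slice[of "\<lambda>z. \<phi> z $ \<alpha>" x y0 c] assms by (simp add: vdiff_def)

lemma Dwedge_slice:
  fixes \<phi> :: "'a::euclidean_space \<times> 'b::euclidean_space \<Rightarrow> 'a \<times> 'b \<Rightarrow> real^'k"
    and \<Gamma> :: "'a \<Rightarrow> 'a \<Rightarrow> real^'k^'k"
  assumes "a \<in> Basis" "b \<in> Basis" "vdiff (\<lambda>z. \<phi> z (a,0)) (x,y0)" "vdiff (\<lambda>z. \<phi> z (b,0)) (x,y0)"
  shows "Dwedge \<Gamma> (\<lambda>x c. \<phi> (x,y0) (c,0)) x a b = Dwedge (pull_fst \<Gamma>) \<phi> (x,y0) (a,0) (b,0)"
  using assms pd_slice_nth[OF assms(3)] pd_slice_nth[OF assms(4)]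
  by (simp add: vec_eq_iff Dwedge_nth)

lemma Dconn_slice:
  fixes \<psi> :: "'a::euclidean_space \<times> 'b::euclidean_space \<Rightarrow> real^'k"
    and \<Gamma> :: "'a \<Rightarrow> 'a \<Rightarrow> real^'k^'k"
  assumes "b \<in> Basis" "vdiff \<psi> (x,y0)"
  shows "Dconn \<Gamma> (\<lambda>x. \<psi> (x,y0)) x b = Dconn (pull_fst \<Gamma>) \<psi> (x,y0) (b,0)"
  using assms pd_slice_nth[OF assms(2)]
  by (simp add: vec_eq_iff Dconn_nth)

lemma kappa_slice:
  fixes \<psi> :: "'a::euclidean_space \<times> 'b::euclidean_space \<Rightarrow> real^'k"
    and \<Gamma> :: "'a \<Rightarrow> 'a \<Rightarrow> real^'k^'k"
  assumes ab: "a \<in> Basis" "b \<in> Basis" and B: "open B" "x \<in> B"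
    and d: "\<And>x'. x' \<in> B \<Longrightarrow> vdiff \<psi> (x',y0)"
    and da: "vdiff (\<lambda>z. Dconn (pull_fst \<Gamma>) \<psi> z (a,0)) (x,y0)"
    and db: "vdiff (\<lambda>z. Dconn (pull_fst \<Gamma>) \<psi> z (b,0)) (x,y0)"
  shows "kappa \<Gamma> (\<lambda>x. \<psi> (x,y0)) x a b = kappa (pull_fst \<Gamma>) \<psi> (x,y0) (a,0) (b,0)"
proof -
  have "kappa \<Gamma> (\<lambda>x. \<psi> (x,y0)) x a b = Dwedge \<Gamma> (\<lambda>x c. Dconn (pull_fst \<Gamma>) \<psi> (x,y0) (c,0)) x a b"
    unfolding kappa_def
    by (rule Dwedge_local[OF B]) (simp_all add: Dconn_slice[OF ab(1) d] Dconn_slice[OF ab(2) d])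
  also have "\<dots> = kappa (pull_fst \<Gamma>) \<psi> (x,y0) (a,0) (b,0)"
    unfolding kappa_def by (rule Dwedge_slice[OF ab da db])
  finally show ?thesis .
qed

lemma pull_fst_local:
  fixes \<Gamma> :: "'a::euclidean_space \<Rightarrow> 'a \<Rightarrow> real^'k^'k"
    and \<phi> :: "'a \<times> 'b::euclidean_space \<Rightarrow> 'a \<times> 'b \<Rightarrow> real^'k" and \<psi> :: "'a \<times> 'b \<Rightarrow> real^'k"
  assumes U: "open U" and Ub: "open Ub" and ex: "exact_connection U \<Gamma>"
    and V: "open V" and VU: "V \<subseteq> U \<times> Ub" and s\<phi>: "smooth_form V \<phi>" and s\<psi>: "smooth_sec V \<psi>"
    and eq: "\<forall>x\<in>V. \<forall>a\<in>Basis. \<forall>b\<in>Basis. Dwedge (pull_fst \<Gamma>) \<phi> x a b = kappa (pull_fst \<Gamma>) \<psi> x a b"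
    and z0: "z0 \<in> V"
  shows "\<exists>W. open W \<and> z0 \<in> W \<and> W \<subseteq> V \<and>
           (\<exists>\<eta>. smooth_sec W \<eta> \<and> (\<forall>y\<in>W. \<forall>a\<in>Basis. \<phi> y a = Dconn (pull_fst \<Gamma>) \<eta> y a))"
proof -
  let ?P = "pull_fst \<Gamma> :: 'a \<times> 'b \<Rightarrow> _"
  have sG: "smooth_connection U \<Gamma>" using ex unfolding exact_connection_def by blast
  have sP: "smooth W (\<lambda>z. ?P z c $ \<alpha> $ \<beta>)" if "open W" "W \<subseteq> U \<times> Ub" "c \<in> Basis" for W c \<alpha> \<beta>
  proof -
    have "fst ` W \<subseteq> U" using that by auto
    then show ?thesis using pull_fst_smooth_conn[OF U that(1) _ sG] that(3)
      unfolding smooth_connection_def by blast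
  qed
  have Gd: "(\<lambda>x. \<Gamma> x c $ \<alpha> $ \<beta>) differentiable (at x)" if "x \<in> U" "c \<in> Basis" for x c \<alpha> \<beta>
    using sG that smooth_diff[OF _ U] unfolding smooth_connection_def by blast
  have \<phi>d: "(\<lambda>z. \<phi> z c $ \<alpha>) differentiable (at z)" if "z \<in> V" "c \<in> Basis" for z c \<alpha>
    using smooth_diff[OF smooth_formD[OF s\<phi> that(2)] V that(1)] .
  obtain x0 y0 where z0e: "z0 = (x0, y0)" by (cases z0)
  obtain A B where AB: "open A" "open B" "z0 \<in> A \<times> B" "A \<times> B \<subseteq> V"
    using open_prod_elim[OF V z0] by metis
  obtain r where r: "r > 0" "ball y0 r \<subseteq> B" using AB(2,3) z0e openE by auto
  let ?W0 = "A \<times> ball y0 r"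
  have W0: "open ?W0" using AB(1) by (simp add: open_Times)
  have W0V: "?W0 \<subseteq> V" using AB r by auto
  have W0U: "?W0 \<subseteq> U \<times> Ub" using W0V VU by auto
  have x0A: "x0 \<in> A" using AB z0e by auto
  have z0W0: "z0 \<in> ?W0" using x0A r z0e by auto
  \<comment> \<open>Step A: vertical closedness\<close>
  have closed: "pd (0,v) (\<lambda>z. \<phi> z (0,w) $ \<alpha>) z = pd (0,w) (\<lambda>z. \<phi> z (0,v) $ \<alpha>) z"
    if z: "z \<in> V" and v: "v \<in> Basis" and w: "w \<in> Basis" for z v w \<alpha>
  proof -
    have e: "Dwedge ?P \<phi> z (0,v) (0,w) $ \<alpha> = kappa ?P \<psi> z (0,v) (0,w) $ \<alpha>"
      using eq z vbasis[OF v] vbasis[OF w] by metis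
    have "pd (0,v) (pd (0,w) (\<lambda>y. \<psi> y $ \<alpha>)) z = pd (0,w) (pd (0,v) (\<lambda>y. \<psi> y $ \<alpha>)) z"
      by (rule pd_sym[OF V z smooth_secD[OF s\<psi>] vbasis[OF v] vbasis[OF w]])
    then have "kappa ?P \<psi> z (0,v) (0,w) $ \<alpha> = 0"
      by (simp add: kappa_def Dwedge_nth Dconn_nth)
    moreover have "Dwedge ?P \<phi> z (0,v) (0,w) $ \<alpha> =
        (pd (0,v) (\<lambda>z. \<phi> z (0,w) $ \<alpha>) z - pd (0,w) (\<lambda>z. \<phi> z (0,v) $ \<alpha>) z) / 2"
      by (simp add: Dwedge_nth)
    ultimately show ?thesis using e by simp
  qed
  \<comment> \<open>Step B: vertical primitive\<close>
  define \<eta>0 where "\<eta>0 z = (\<chi> \<alpha>. integral {0..1} (\<lambda>s. \<Sum>v\<in>Basis.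
      \<phi> (fst z, y0 + s *\<^sub>R (snd z - y0)) (0,v) $ \<alpha> * ((snd z - y0) \<bullet> v)))" for z
  have \<eta>0c: "(\<lambda>z. \<eta>0 z $ \<alpha>) = (\<lambda>z. integral {0..1} (\<lambda>s. \<Sum>v\<in>Basis.
      (\<lambda>v z. \<phi> z (0,v) $ \<alpha>) v (fst z, y0 + s *\<^sub>R (snd z - y0)) * ((snd z - y0) \<bullet> v)))" for \<alpha>
    unfolding \<eta>0_def by simp
  note VP = vert_primitive[OF V AB(1) W0V, of "\<lambda>v z. \<phi> z (0,v) $ \<alpha>" for \<alpha>]
  have s\<eta>0: "smooth_sec ?W0 \<eta>0"
    unfolding smooth_sec_def \<eta>0c
    by (intro allI VP(1)) (auto intro: smooth_formD[OF s\<phi>] vbasis closed)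
  have p\<eta>0: "pd (0,w) (\<lambda>z. \<eta>0 z $ \<alpha>) z = \<phi> z (0,w) $ \<alpha>" if "z \<in> ?W0" "w \<in> Basis" for z w \<alpha>
    unfolding \<eta>0c
    by (rule VP(2)[OF _ _ that]) (auto intro: smooth_formD[OF s\<phi>] vbasis closed)
  have \<eta>0s: "smooth ?W0 (\<lambda>z. \<eta>0 z $ \<alpha>)" for \<alpha> using s\<eta>0 smooth_secD by blast
  have \<eta>0d: "(\<lambda>z. \<eta>0 z $ \<alpha>) differentiable (at z)" if "z \<in> ?W0" for z \<alpha>
    using smooth_diff[OF \<eta>0s W0 that] .
  define \<phi>' where "\<phi>' y c = \<phi> y c - Dconn ?P \<eta>0 y c" for y c
  have C1: "Dconn ?P \<eta>0 z (0,w) = \<phi> z (0,w)" if "z \<in> ?W0" "w \<in> Basis" for z w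
    using p\<eta>0[OF that] by (simp add: vec_eq_iff Dconn_nth)
  have sD\<eta>0: "smooth ?W0 (\<lambda>z. Dconn ?P \<eta>0 z c $ \<alpha>)" if "c \<in> Basis" for c \<alpha>
    by (rule smooth_Dconn[where G="pull_fst \<Gamma>", OF W0 that s\<eta>0 sP[OF W0 W0U that]])
  have s\<phi>': "smooth ?W0 (\<lambda>z. \<phi>' z c $ \<alpha>)" if "c \<in> Basis" for c \<alpha>
  proof -
    have "smooth ?W0 (\<lambda>z. \<phi> z c $ \<alpha> - Dconn ?P \<eta>0 z c $ \<alpha>)"
      by (intro smooth_diff'[OF W0] sD\<eta>0[OF that] smooth_subset[OF smooth_formD[OF s\<phi> that] W0V])
    then show ?thesis by (simp add: \<phi>'_def)
  qed
  have D: "pd (0,w) (\<lambda>z. \<phi>' z (a,0) $ \<alpha>) z = 0"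
    if z: "z \<in> ?W0" and a: "a \<in> Basis" and w: "w \<in> Basis" for z a w \<alpha>
  proof -
    have zV: "z \<in> V" using z W0V by auto
    have fzU: "fst z \<in> U" using z W0U by auto
    have ha: "(a, 0) \<in> (Basis :: ('a \<times> 'b) set)" using hbasis[OF a] .
    have hw: "(0, w) \<in> (Basis :: ('a \<times> 'b) set)" using vbasis[OF w] .
    have T3d: "(\<lambda>y. \<Gamma> (fst y) a $ \<alpha> $ \<beta>) differentiable (at z)" for \<alpha> \<beta>
    proof -
      have "(\<lambda>x. \<Gamma> x a $ \<alpha> $ \<beta>) differentiable (at (fst z))" using Gd[OF fzU a] .
      then have "((\<lambda>x. \<Gamma> x a $ \<alpha> $ \<beta>) \<circ> fst) differentiable (at z)"
        by (intro differentiable_chain_at) (simp_all add: bounded_linear_imp_differentiable bounded_linear_fst)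
      then show ?thesis by (simp add: o_def)
    qed
    have T3p: "pd (0,w) (\<lambda>y. \<Gamma> (fst y) a $ \<alpha> $ \<beta>) z = 0" for \<alpha> \<beta>
      using pd_fst_v[of "\<lambda>x. \<Gamma> x a $ \<alpha> $ \<beta>" z w] Gd[OF fzU a] by simp
    have T2d: "(\<lambda>y. pd (a,0) (\<lambda>y. \<eta>0 y $ \<alpha>) y) differentiable (at z)" for \<alpha>
      using smooth_diff[OF smooth_pd[OF \<eta>0s ha] W0 z] by simp
    have \<psi>s: "smooth V (\<lambda>y. \<psi> y $ \<alpha>)" for \<alpha> using smooth_secD[OF s\<psi>] .
    have \<psi>d: "(\<lambda>y. \<psi> y $ \<alpha>) differentiable (at z)" for \<alpha> using smooth_diff[OF \<psi>s V zV] .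
    have \<psi>2d: "(\<lambda>y. pd (a,0) (\<lambda>y. \<psi> y $ \<alpha>) y) differentiable (at z)" for \<alpha>
      using smooth_diff[OF smooth_pd[OF \<psi>s ha] V zV] by simp
    have e: "Dwedge ?P \<phi> z (a,0) (0,w) $ \<alpha> = kappa ?P \<psi> z (a,0) (0,w) $ \<alpha>"
      using eq zV ha hw by metis
    have k1: "(\<lambda>y. Dconn ?P \<psi> y (0,w) $ \<alpha>) = pd (0,w) (\<lambda>y. \<psi> y $ \<alpha>)"
      by (simp add: Dconn_nth)
    have k2: "(\<lambda>y. Dconn ?P \<psi> y (a,0) $ \<alpha>) =
        (\<lambda>y. pd (a,0) (\<lambda>y. \<psi> y $ \<alpha>) y + (\<Sum>\<beta>\<in>UNIV. \<Gamma> (fst y) a $ \<alpha> $ \<beta> * \<psi> y $ \<beta>))"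
      using a by (simp add: Dconn_nth)
    have k3: "pd (0,w) (\<lambda>y. pd (a,0) (\<lambda>y. \<psi> y $ \<alpha>) y + (\<Sum>\<beta>\<in>UNIV. \<Gamma> (fst y) a $ \<alpha> $ \<beta> * \<psi> y $ \<beta>)) z
        = pd (0,w) (pd (a,0) (\<lambda>y. \<psi> y $ \<alpha>)) z + (\<Sum>\<beta>\<in>UNIV. \<Gamma> (fst z) a $ \<alpha> $ \<beta> * pd (0,w) (\<lambda>y. \<psi> y $ \<beta>) z)"
    proof -
      have "pd (0,w) (\<lambda>y. pd (a,0) (\<lambda>y. \<psi> y $ \<alpha>) y + (\<Sum>\<beta>\<in>UNIV. \<Gamma> (fst y) a $ \<alpha> $ \<beta> * \<psi> y $ \<beta>)) z
          = pd (0,w) (\<lambda>y. pd (a,0) (\<lambda>y. \<psi> y $ \<alpha>) y) z + pd (0,w) (\<lambda>y. \<Sum>\<beta>\<in>UNIV. \<Gamma> (fst y) a $ \<alpha> $ \<beta> * \<psi> y $ \<beta>) z"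
        by (rule pd_add[OF \<psi>2d], rule differentiable_sum) (auto intro!: differentiable_mult T3d \<psi>d)
      also have "pd (0,w) (\<lambda>y. \<Sum>\<beta>\<in>UNIV. \<Gamma> (fst y) a $ \<alpha> $ \<beta> * \<psi> y $ \<beta>) z
          = (\<Sum>\<beta>\<in>UNIV. pd (0,w) (\<lambda>y. \<Gamma> (fst y) a $ \<alpha> $ \<beta> * \<psi> y $ \<beta>) z)"
        by (rule pd_sum) (auto intro: differentiable_mult T3d \<psi>d)
      also have "\<dots> = (\<Sum>\<beta>\<in>UNIV. \<Gamma> (fst z) a $ \<alpha> $ \<beta> * pd (0,w) (\<lambda>y. \<psi> y $ \<beta>) z)"
        by (rule sum.cong) (simp_all add: pd_mult[OF T3d \<psi>d] T3p)
      finally show ?thesis by simp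
    qed
    have sym\<psi>: "pd (a,0) (pd (0,w) (\<lambda>y. \<psi> y $ \<alpha>)) z = pd (0,w) (pd (a,0) (\<lambda>y. \<psi> y $ \<alpha>)) z"
      by (rule pd_sym[OF V zV \<psi>s ha hw])
    have kap0: "kappa ?P \<psi> z (a,0) (0,w) $ \<alpha> = 0"
      unfolding kappa_def Dwedge_nth k1 k2 k3 using a sym\<psi>
      by (simp add: Dconn_nth)
    have mixed: "pd (0,w) (\<lambda>z. \<phi> z (a,0) $ \<alpha>) z =
        pd (a,0) (\<lambda>z. \<phi> z (0,w) $ \<alpha>) z + (\<Sum>\<beta>\<in>UNIV. \<Gamma> (fst z) a $ \<alpha> $ \<beta> * \<phi> z (0,w) $ \<beta>)"
    proof -
      have "Dwedge ?P \<phi> z (a,0) (0,w) $ \<alpha> = ((pd (a,0) (\<lambda>z. \<phi> z (0,w) $ \<alpha>) z +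
          (\<Sum>\<beta>\<in>UNIV. \<Gamma> (fst z) a $ \<alpha> $ \<beta> * \<phi> z (0,w) $ \<beta>)) - pd (0,w) (\<lambda>z. \<phi> z (a,0) $ \<alpha>) z) / 2"
        using a by (simp add: Dwedge_nth)
      then show ?thesis using e kap0 by simp
    qed
    have loc: "pd (a,0) (\<lambda>z. \<phi> z (0,w) $ \<alpha>) z = pd (a,0) (\<lambda>z. pd (0,w) (\<lambda>z. \<eta>0 z $ \<alpha>) z) z"
      by (rule pd_local[OF W0 z]) (simp add: p\<eta>0 w)
    have sym\<eta>: "pd (a,0) (pd (0,w) (\<lambda>y. \<eta>0 y $ \<alpha>)) z = pd (0,w) (pd (a,0) (\<lambda>y. \<eta>0 y $ \<alpha>)) z"
      by (rule pd_sym[OF W0 z \<eta>0s ha hw])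
    have "(\<lambda>z. \<phi>' z (a,0) $ \<alpha>) = (\<lambda>y. \<phi> y (a,0) $ \<alpha> - (pd (a,0) (\<lambda>y. \<eta>0 y $ \<alpha>) y +
            (\<Sum>\<beta>\<in>UNIV. \<Gamma> (fst y) a $ \<alpha> $ \<beta> * \<eta>0 y $ \<beta>)))"
      using a by (simp add: \<phi>'_def Dconn_nth)
    then have "pd (0,w) (\<lambda>z. \<phi>' z (a,0) $ \<alpha>) z =
        pd (0,w) (\<lambda>y. \<phi> y (a,0) $ \<alpha>) z - (pd (0,w) (\<lambda>y. pd (a,0) (\<lambda>y. \<eta>0 y $ \<alpha>) y) z +
          pd (0,w) (\<lambda>y. \<Sum>\<beta>\<in>UNIV. \<Gamma> (fst y) a $ \<alpha> $ \<beta> * \<eta>0 y $ \<beta>) z)"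
      using \<phi>d[OF zV ha] T2d \<eta>0d[OF z] T3d
      by (simp add: pd_diff pd_add differentiable_sum differentiable_mult differentiable_add)
    also have "pd (0,w) (\<lambda>y. \<Sum>\<beta>\<in>UNIV. \<Gamma> (fst y) a $ \<alpha> $ \<beta> * \<eta>0 y $ \<beta>) z
        = (\<Sum>\<beta>\<in>UNIV. \<Gamma> (fst z) a $ \<alpha> $ \<beta> * \<phi> z (0,w) $ \<beta>)"
    proof -
      have "pd (0,w) (\<lambda>y. \<Sum>\<beta>\<in>UNIV. \<Gamma> (fst y) a $ \<alpha> $ \<beta> * \<eta>0 y $ \<beta>) z
          = (\<Sum>\<beta>\<in>UNIV. pd (0,w) (\<lambda>y. \<Gamma> (fst y) a $ \<alpha> $ \<beta> * \<eta>0 y $ \<beta>) z)"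
        by (rule pd_sum) (auto intro: differentiable_mult T3d \<eta>0d[OF z])
      also have "\<dots> = (\<Sum>\<beta>\<in>UNIV. \<Gamma> (fst z) a $ \<alpha> $ \<beta> * \<phi> z (0,w) $ \<beta>)"
        by (rule sum.cong) (simp_all add: pd_mult[OF T3d \<eta>0d[OF z]] T3p p\<eta>0[OF z w])
      finally show ?thesis .
    qed
    finally show ?thesis using mixed loc sym\<eta> by simp
  qed
  have E: "\<phi>' (x,y) (a,0) = \<phi>' (x,y0) (a,0)" if x: "x \<in> A" and y: "y \<in> ball y0 r" and a: "a \<in> Basis" for x y a
  proof (subst vec_eq_iff, rule allI)
    fix \<alpha>
    let ?G = "\<lambda>z. \<phi>' z (a,0) $ \<alpha>"
    have "\<exists>c. \<forall>y\<in>ball y0 r. ?G (x,y) = c"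
    proof (rule has_derivative_zero_constant[OF convex_ball])
      fix y' assume y': "y' \<in> ball y0 r"
      then have xy': "(x,y') \<in> ?W0" using x by simp
      have Gd: "?G differentiable (at (x,y'))"
        using smooth_diff[OF s\<phi>'[OF hbasis[OF a]] W0 xy'] .
      have "((\<lambda>y. (x,y)) has_derivative (\<lambda>h. (0,h))) (at y')"
        by (auto intro!: derivative_eq_intros)
      from has_derivative_compose[OF this frechet_derivative_works[THEN iffD1, OF Gd]]
      have "((\<lambda>y. ?G (x,y)) has_derivative (\<lambda>h. frechet_derivative ?G (at (x,y')) (0,h))) (at y')" .
      moreover have "frechet_derivative ?G (at (x,y')) (0,h) = 0" for h
        using fd_vert[OF Gd, of h] D[OF xy' a] by simp
      ultimately show "((\<lambda>y. ?G (x,y)) has_derivative (\<lambda>h. 0)) (at y' within ball y0 r)"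
        by (simp add: has_derivative_at_withinI)
    qed
    then show "\<phi>' (x,y) (a,0) $ \<alpha> = \<phi>' (x,y0) (a,0) $ \<alpha>"
      using y r by (metis centre_in_ball)
  qed
  define \<phi>s where "\<phi>s x c = \<phi>' (x,y0) (c,0)" for x c
  define \<psi>s where "\<psi>s x = \<psi> (x,y0) - \<eta>0 (x,y0)" for x
  have slW0: "(\<lambda>x. (x,y0)) ` A \<subseteq> ?W0" using r by auto
  have AU: "A \<subseteq> U" using slW0 W0U by auto
  have s\<phi>s: "smooth_form A \<phi>s"
    unfolding smooth_form_def smooth_sec_def \<phi>s_def
    by (intro ballI allI smooth_slice[OF _ W0 AB(1) slW0] s\<phi>' hbasis)
  have s\<psi>W0: "smooth_sec ?W0 (\<lambda>z. \<psi> z - \<eta>0 z)"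
    unfolding smooth_sec_def
    by (auto intro!: smooth_diff'[OF W0] \<eta>0s smooth_subset[OF smooth_secD[OF s\<psi>] W0V])
  have s\<psi>s: "smooth_sec A \<psi>s"
  proof -
    have "smooth A (\<lambda>x. \<psi> (x,y0) $ \<alpha> - \<eta>0 (x,y0) $ \<alpha>)" for \<alpha>
      using smooth_slice[OF _ W0 AB(1) slW0] s\<psi>W0 unfolding smooth_sec_def by auto
    then show ?thesis unfolding smooth_sec_def \<psi>s_def by simp
  qed
  have sP0: "\<And>c \<alpha> \<beta>. c \<in> Basis \<Longrightarrow> smooth ?W0 (\<lambda>z. ?P z c $ \<alpha> $ \<beta>)"
    using sP[OF W0 W0U] .
  have Feq: "Dwedge \<Gamma> \<phi>s x a b = kappa \<Gamma> \<psi>s x a b" if x: "x \<in> A" and a: "a \<in> Basis" and b: "b \<in> Basis" for x a b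
  proof -
    let ?z = "(x,y0)"
    have zW0: "?z \<in> ?W0" using x r by simp
    have zV: "?z \<in> V" using zW0 W0V by auto
    have vd\<phi>': "vdiff (\<lambda>z. \<phi>' z (c,0)) ?z" if "c \<in> Basis" for c
      unfolding vdiff_def using smooth_diff[OF s\<phi>'[OF hbasis[OF that]] W0 zW0] by blast
    have vd\<phi>: "vdiff (\<lambda>z. \<phi> z (c,0)) ?z" if "c \<in> Basis" for c
      unfolding vdiff_def using \<phi>d[OF zV hbasis[OF that]] by blast
    have vdD: "vdiff (\<lambda>z. Dconn ?P \<eta>0 z (c,0)) ?z" if "c \<in> Basis" for c
      unfolding vdiff_def using smooth_diff[OF sD\<eta>0[OF hbasis[OF that]] W0 zW0] by blast
    have "Dwedge \<Gamma> \<phi>s x a b = Dwedge ?P \<phi>' ?z (a,0) (b,0)"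
      unfolding \<phi>s_def by (rule Dwedge_slice[OF a b vd\<phi>'[OF a] vd\<phi>'[OF b]])
    also have "\<dots> = Dwedge ?P \<phi> ?z (a,0) (b,0) - Dwedge ?P (Dconn ?P \<eta>0) ?z (a,0) (b,0)"
      unfolding \<phi>'_def by (rule Dwedge_diff[OF vd\<phi>[OF a] vd\<phi>[OF b] vdD[OF a] vdD[OF b]])
    also have "\<dots> = kappa ?P \<psi> ?z (a,0) (b,0) - kappa ?P \<eta>0 ?z (a,0) (b,0)"
    proof -
      have "Dwedge ?P \<phi> ?z (a,0) (b,0) = kappa ?P \<psi> ?z (a,0) (b,0)"
        using eq zV hbasis[OF a] hbasis[OF b] by blast
      then show ?thesis by (simp add: kappa_def)
    qed
    also have "\<dots> = kappa ?P (\<lambda>y. \<psi> y - \<eta>0 y) ?z (a,0) (b,0)"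
      by (rule kappa_diff[OF W0 zW0 smooth_sec_subset[OF s\<psi> W0V] s\<eta>0 sP0 hbasis[OF a] hbasis[OF b], symmetric])
    also have "\<dots> = kappa \<Gamma> \<psi>s x a b"
      unfolding \<psi>s_def
    proof (rule kappa_slice[OF a b AB(1) x, symmetric])
      fix x' assume "x' \<in> A"
      then have "(x',y0) \<in> ?W0" using r by simp
      then show "vdiff (\<lambda>y. \<psi> y - \<eta>0 y) (x',y0)" by (rule smooth_sec_vdiff[OF s\<psi>W0 W0])
    next
      show "vdiff (\<lambda>z. Dconn ?P (\<lambda>y. \<psi> y - \<eta>0 y) z (a,0)) ?z"
        unfolding vdiff_def using smooth_diff[OF smooth_Dconn[where G="pull_fst \<Gamma>", OF W0 hbasis[OF a] s\<psi>W0 sP0[OF hbasis[OF a]]] W0 zW0] by blast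
      show "vdiff (\<lambda>z. Dconn ?P (\<lambda>y. \<psi> y - \<eta>0 y) z (b,0)) ?z"
        unfolding vdiff_def using smooth_diff[OF smooth_Dconn[where G="pull_fst \<Gamma>", OF W0 hbasis[OF b] s\<psi>W0 sP0[OF hbasis[OF b]]] W0 zW0] by blast
    qed
    finally show ?thesis .
  qed
  have "\<forall>x\<in>A. \<exists>W. open W \<and> x \<in> W \<and> W \<subseteq> A \<and>
            (\<exists>\<eta>. smooth_sec W \<eta> \<and> (\<forall>y\<in>W. \<forall>a\<in>Basis. \<phi>s y a = Dconn \<Gamma> \<eta> y a))"
  proof -
    note ex3 = ex[unfolded exact_connection_def, THEN conjunct2, THEN conjunct2]
    have Feq': "\<forall>x\<in>A. \<forall>a\<in>Basis. \<forall>b\<in>Basis. Dwedge \<Gamma> \<phi>s x a b = kappa \<Gamma> \<psi>s x a b"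
      using Feq by blast
    have pre: "open A \<and> A \<subseteq> U \<and> smooth_form A \<phi>s \<and> smooth_sec A \<psi>s \<and>
        (\<forall>x\<in>A. \<forall>a\<in>Basis. \<forall>b\<in>Basis. Dwedge \<Gamma> \<phi>s x a b = kappa \<Gamma> \<psi>s x a b)"
      using AB(1) AU s\<phi>s s\<psi>s Feq' by simp
    show ?thesis by (rule mp[OF spec[OF spec[OF spec[OF ex3, of A], of \<phi>s], of \<psi>s] pre])
  qed
  then obtain W1 \<eta>1 where W1: "open W1" "x0 \<in> W1" "W1 \<subseteq> A" and s\<eta>1: "smooth_sec W1 \<eta>1"
    and e\<eta>1: "\<And>y a. y \<in> W1 \<Longrightarrow> a \<in> Basis \<Longrightarrow> \<phi>s y a = Dconn \<Gamma> \<eta>1 y a"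
    using x0A by metis
  let ?Wf = "W1 \<times> ball y0 r"
  define \<eta> where "\<eta> z = \<eta>0 z + \<eta>1 (fst z)" for z
  have W: "open ?Wf" using W1 by (simp add: open_Times)
  have WW0: "?Wf \<subseteq> ?W0" using W1 by auto
  have z0W: "z0 \<in> ?Wf" using W1 r z0e by simp
  have s\<eta>1f: "smooth ?Wf (\<lambda>z. \<eta>1 (fst z) $ \<alpha>)" for \<alpha>
    by (rule smooth_fst[OF smooth_secD[OF s\<eta>1] W1(1) W]) auto
  have s\<eta>: "smooth_sec ?Wf \<eta>"
    unfolding smooth_sec_def \<eta>_def
    by (auto intro!: smooth_add[OF W] s\<eta>1f smooth_subset[OF \<eta>0s WW0])
  have main: "\<phi> z c = Dconn ?P \<eta> z c" if z: "z \<in> ?Wf" and c: "c \<in> Basis" for z c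
  proof -
    have zW0: "z \<in> ?W0" using z WW0 by auto
    have fz: "fst z \<in> W1" using z by auto
    have \<eta>1d: "(\<lambda>x. \<eta>1 x $ \<alpha>) differentiable (at (fst z))" for \<alpha>
      using smooth_diff[OF smooth_secD[OF s\<eta>1] W1(1) fz] .
    have vd1: "vdiff \<eta>0 z" unfolding vdiff_def using \<eta>0d[OF zW0] by blast
    have vd2: "vdiff (\<lambda>z. \<eta>1 (fst z)) z"
      unfolding vdiff_def using smooth_diff[OF s\<eta>1f W z] by blast
    have split: "Dconn ?P \<eta> z c = Dconn ?P \<eta>0 z c + Dconn ?P (\<lambda>z. \<eta>1 (fst z)) z c"
      unfolding \<eta>_def by (rule Dconn_add[OF vd1 vd2])
    from c show ?thesis
    proof (cases rule: prod_basis_cases)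
      case (1 a)
      have "Dconn ?P (\<lambda>z. \<eta>1 (fst z)) z (a,0) = Dconn \<Gamma> \<eta>1 (fst z) a"
        using 1 pd_fst_h[OF \<eta>1d] by (simp add: vec_eq_iff Dconn_nth)
      also have "\<dots> = \<phi>s (fst z) a" using e\<eta>1[OF fz \<open>a \<in> Basis\<close>] by simp
      also have "\<dots> = \<phi>' z (a,0)"
        unfolding \<phi>s_def using E[of "fst z" "snd z" a] z W1 \<open>a \<in> Basis\<close> by auto
      finally show ?thesis using split 1 by (simp add: \<phi>'_def)
    next
      case (2 w)
      have "Dconn ?P (\<lambda>z. \<eta>1 (fst z)) z (0,w) = 0"
        using pd_fst_v[OF \<eta>1d] by (simp add: vec_eq_iff Dconn_nth)
      then show ?thesis using split 2 C1[OF zW0 \<open>w \<in> Basis\<close>] by simp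
    qed
  qed
  have WV: "?Wf \<subseteq> V" using WW0 W0V by (rule order_trans)
  have main': "\<forall>y\<in>?Wf. \<forall>a\<in>Basis. \<phi> y a = Dconn ?P \<eta> y a" using main by blast
  show ?thesis
    by (rule exI[of _ "?Wf"], intro conjI exI[of _ \<eta>] W z0W WV s\<eta> main')
qed

lemma pull_fst_exact:
  fixes \<Gamma> :: "'a::euclidean_space \<Rightarrow> 'a \<Rightarrow> real^'k^'k"
  assumes U: "open U" and Ub: "open Ub" and ex: "exact_connection U \<Gamma>"
  shows "exact_connection (U \<times> Ub) (pull_fst \<Gamma> :: 'a \<times> 'b::euclidean_space \<Rightarrow> _)"
proof -
  let ?P = "pull_fst \<Gamma> :: 'a \<times> 'b \<Rightarrow> _"
  have sG: "smooth_connection U \<Gamma>" and cr: "\<forall>x\<in>U. \<forall>y\<in>U. curv_rank \<Gamma> x = curv_rank \<Gamma> y"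
    using ex unfolding exact_connection_def by blast+
  have Gd: "(\<lambda>x. \<Gamma> x c $ \<alpha> $ \<beta>) differentiable (at x)" if "x \<in> U" "c \<in> Basis" for x c \<alpha> \<beta>
    using sG that smooth_diff[OF _ U] unfolding smooth_connection_def by blast
  have UU: "open (U \<times> Ub)" using U Ub by (simp add: open_Times)
  have "smooth_connection (U \<times> Ub) ?P"
    by (rule pull_fst_smooth_conn[OF U UU _ sG]) auto
  moreover have "\<forall>x\<in>U \<times> Ub. \<forall>y\<in>U \<times> Ub. curv_rank ?P x = curv_rank ?P y"
  proof (intro ballI)
    fix x y :: "'a \<times> 'b" assume x: "x \<in> U \<times> Ub" and y: "y \<in> U \<times> Ub"
    have fx: "fst x \<in> U" and fy: "fst y \<in> U" using x y by auto
    have "curv_rank ?P x = curv_rank \<Gamma> (fst x)"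
      by (rule curv_rank_pull) (rule Gd[OF fx])
    also have "\<dots> = curv_rank \<Gamma> (fst y)" using cr fx fy by blast
    also have "\<dots> = curv_rank ?P y"
      by (rule curv_rank_pull[symmetric]) (rule Gd[OF fy])
    finally show "curv_rank ?P x = curv_rank ?P y" .
  qed
  moreover have "\<forall>V \<phi> \<psi>. open V \<and> V \<subseteq> U \<times> Ub \<and> smooth_form V \<phi> \<and> smooth_sec V \<psi> \<and>
        (\<forall>x\<in>V. \<forall>a\<in>Basis. \<forall>b\<in>Basis. Dwedge ?P \<phi> x a b = kappa ?P \<psi> x a b) \<longrightarrow>
        (\<forall>x\<in>V. \<exists>W. open W \<and> x \<in> W \<and> W \<subseteq> V \<and>
            (\<exists>\<eta>. smooth_sec W \<eta> \<and> (\<forall>y\<in>W. \<forall>a\<in>Basis. \<phi> y a = Dconn ?P \<eta> y a)))"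
  proof (intro allI impI ballI)
    fix V \<phi> \<psi> x
    assume H: "open V \<and> V \<subseteq> U \<times> Ub \<and> smooth_form V \<phi> \<and> smooth_sec V \<psi> \<and>
        (\<forall>x\<in>V. \<forall>a\<in>Basis. \<forall>b\<in>Basis. Dwedge ?P \<phi> x a b = kappa ?P \<psi> x a b)" and x: "x \<in> V"
    show "\<exists>W. open W \<and> x \<in> W \<and> W \<subseteq> V \<and>
            (\<exists>\<eta>. smooth_sec W \<eta> \<and> (\<forall>y\<in>W. \<forall>a\<in>Basis. \<phi> y a = Dconn ?P \<eta> y a))"
    proof (rule pull_fst_local[OF U Ub ex _ _ _ _ _ x])
      show "open V" "V \<subseteq> U \<times> Ub" "smooth_form V \<phi>" "smooth_sec V \<psi>"
           "\<forall>x\<in>V. \<forall>a\<in>Basis. \<forall>b\<in>Basis. Dwedge ?P \<phi> x a b = kappa ?P \<psi> x a b"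
        using H by blast+
    qed
  qed
  ultimately show ?thesis unfolding exact_connection_def by blast
qed

lemma pd_lin:
  assumes "bounded_linear T" "f differentiable (at (T z))"
  shows "pd c (\<lambda>z. f (T z)) z = pd (T c) f (T z)"
  using pd_chain_fd[OF assms(2) bounded_linear_imp_has_derivative[OF assms(1)]] unfolding pd_def .

lemma Dwedge_lin:
  assumes T': "bounded_linear T'" and inv: "\<And>x. T (T' x) = x"
    and da: "vdiff (\<lambda>z. \<phi> z (T' a)) (T' w)" and db: "vdiff (\<lambda>z. \<phi> z (T' b)) (T' w)"
  shows "Dwedge G (\<lambda>y e. \<phi> (T' y) (T' e)) w a b = Dwedge (\<lambda>z c. G (T z) (T c)) \<phi> (T' w) (T' a) (T' b)"
proof -
  have "pd c (\<lambda>y. \<phi> (T' y) e $ \<alpha>) w = pd (T' c) (\<lambda>z. \<phi> z e $ \<alpha>) (T' w)"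
    if "vdiff (\<lambda>z. \<phi> z e) (T' w)" for c e \<alpha>
    using pd_lin[OF T', of "\<lambda>z. \<phi> z e $ \<alpha>" w c] that by (simp add: vdiff_def)
  then show ?thesis using da db inv by (simp add: vec_eq_iff Dwedge_nth)
qed

lemma Dconn_lin:
  assumes T': "bounded_linear T'" and inv: "\<And>x. T (T' x) = x"
    and d: "vdiff \<psi> (T' w)"
  shows "Dconn G (\<lambda>y. \<psi> (T' y)) w a = Dconn (\<lambda>z c. G (T z) (T c)) \<psi> (T' w) (T' a)"
proof -
  have "pd a (\<lambda>y. \<psi> (T' y) $ \<alpha>) w = pd (T' a) (\<lambda>z. \<psi> z $ \<alpha>) (T' w)" for \<alpha>
    using pd_lin[OF T', of "\<lambda>z. \<psi> z $ \<alpha>" w a] d by (simp add: vdiff_def)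
  then show ?thesis using inv by (simp add: vec_eq_iff Dconn_nth)
qed

lemma exact_transport:
  fixes T :: "'d::euclidean_space \<Rightarrow> 'c::euclidean_space" and T' :: "'c \<Rightarrow> 'd"
    and G :: "'c \<Rightarrow> 'c \<Rightarrow> real^'k^'k"
  assumes lT: "bounded_linear T" and lT': "bounded_linear T'"
    and inv1: "\<And>x. T (T' x) = x" and inv2: "\<And>x. T' (T x) = x"
    and TB: "\<And>b. b \<in> Basis \<Longrightarrow> T b \<in> Basis" and T'B: "\<And>b. b \<in> Basis \<Longrightarrow> T' b \<in> Basis"
    and Om: "open Om" and ex: "exact_connection Om G"
  shows "exact_connection (T -` Om) (\<lambda>z c. G (T z) (T c))"
proof -
  let ?G = "\<lambda>z c. G (T z) (T c)"
  let ?Om = "T -` Om"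
  have sG: "smooth_connection Om G" and cr: "\<forall>x\<in>Om. \<forall>y\<in>Om. curv_rank G x = curv_rank G y"
    using ex unfolding exact_connection_def by blast+
  have cT: "continuous_on UNIV T" using lT linear_continuous_on by blast
  have cT': "continuous_on UNIV T'" using lT' linear_continuous_on by blast
  have Oo: "open ?Om" by (rule continuous_imp_open_vimage[OF cT]) (use Om in auto)
  have Gs: "smooth Om (\<lambda>x. G x c $ \<alpha> $ \<beta>)" if "c \<in> Basis" for c \<alpha> \<beta>
    using sG that unfolding smooth_connection_def by blast
  have Gd: "(\<lambda>x. G x c $ \<alpha> $ \<beta>) differentiable (at x)" if "x \<in> Om" "c \<in> Basis" for x c \<alpha> \<beta>
    using smooth_diff[OF Gs[OF that(2)] Om that(1)] .
  have sGt: "smooth W (\<lambda>z. ?G z c $ \<alpha> $ \<beta>)" if W: "open W" "W \<subseteq> ?Om" and c: "c \<in> Basis" for W c \<alpha> \<beta>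
  proof -
    have "T ` W \<subseteq> Om" using W by auto
    then show ?thesis using smooth_comp_linear[OF W(1) Om _ lT Gs[OF TB[OF c]]] by blast
  qed
  have part1: "smooth_connection ?Om ?G"
    unfolding smooth_connection_def using sGt[OF Oo order_refl] by blast
  have curvT: "curv ?G z c d = curv G (T z) (T c) (T d)" if z: "z \<in> ?Om" and c: "c \<in> Basis" and d: "d \<in> Basis" for z c d
  proof -
    have Tz: "T z \<in> Om" using z by simp
    have "pdm e (\<lambda>y. ?G y f) z = pdm (T e) (\<lambda>y. G y (T f)) (T z)" if "f \<in> Basis" for e f
    proof -
      have "pd e (\<lambda>y. G (T y) (T f) $ \<alpha> $ \<beta>) z = pd (T e) (\<lambda>x. G x (T f) $ \<alpha> $ \<beta>) (T z)" for \<alpha> \<beta>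
        using pd_lin[OF lT, of "\<lambda>x. G x (T f) $ \<alpha> $ \<beta>" z e] Gd[OF Tz TB[OF that]] by simp
      then show ?thesis by (simp add: vec_eq_iff pdm_nth)
    qed
    then show ?thesis using c d by (simp add: curv_def)
  qed
  have crT: "curv_rank ?G z = curv_rank G (T z)" if z: "z \<in> ?Om" for z
  proof -
    have "{v::real^'k. \<forall>c\<in>Basis. \<forall>d\<in>Basis. curv ?G z c d *v v = 0} =
          {v::real^'k. \<forall>c\<in>Basis. \<forall>d\<in>Basis. curv G (T z) c d *v v = 0}"
    proof (intro Collect_cong iffI ballI)
      fix v :: "real^'k" and c d :: 'c
      assume H: "\<forall>c\<in>Basis. \<forall>d\<in>Basis. curv ?G z c d *v v = 0" and c: "c \<in> Basis" and d: "d \<in> Basis"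
      have "curv ?G z (T' c) (T' d) *v v = 0" using H T'B[OF c] T'B[OF d] by blast
      then show "curv G (T z) c d *v v = 0" using curvT[OF z T'B[OF c] T'B[OF d]] inv1 by simp
    next
      fix v :: "real^'k" and c d :: 'd
      assume H: "\<forall>c\<in>Basis. \<forall>d\<in>Basis. curv G (T z) c d *v v = 0" and c: "c \<in> Basis" and d: "d \<in> Basis"
      have "curv G (T z) (T c) (T d) *v v = 0" using H TB[OF c] TB[OF d] by blast
      then show "curv ?G z c d *v v = 0" using curvT[OF z c d] by simp
    qed
    then show ?thesis unfolding curv_rank_def by simp
  qed
  have part2: "\<forall>x\<in>?Om. \<forall>y\<in>?Om. curv_rank ?G x = curv_rank ?G y"
  proof (intro ballI)
    fix x y assume x: "x \<in> ?Om" and y: "y \<in> ?Om"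
    then have "T x \<in> Om" "T y \<in> Om" by auto
    then have "curv_rank G (T x) = curv_rank G (T y)" using cr by blast
    then show "curv_rank ?G x = curv_rank ?G y" by (simp only: crT[OF x] crT[OF y])
  qed
  have part3: "\<exists>W. open W \<and> z0 \<in> W \<and> W \<subseteq> V \<and>
            (\<exists>\<eta>. smooth_sec W \<eta> \<and> (\<forall>y\<in>W. \<forall>a\<in>Basis. \<phi> y a = Dconn ?G \<eta> y a))"
    if V: "open V" and VO: "V \<subseteq> ?Om" and s\<phi>: "smooth_form V \<phi>" and s\<psi>: "smooth_sec V \<psi>"
      and eq: "\<forall>x\<in>V. \<forall>a\<in>Basis. \<forall>b\<in>Basis. Dwedge ?G \<phi> x a b = kappa ?G \<psi> x a b"
      and z0: "z0 \<in> V" for V \<phi> \<psi> z0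
  proof -
    let ?V2 = "T' -` V"
    have V2: "open ?V2" by (rule continuous_imp_open_vimage[OF cT']) (use V in auto)
    have V2O: "?V2 \<subseteq> Om"
    proof
      fix w assume "w \<in> ?V2"
      then have "T' w \<in> V" by simp
      then have "T (T' w) \<in> Om" using VO by blast
      then show "w \<in> Om" using inv1 by simp
    qed
    have T'V2: "T' ` ?V2 \<subseteq> V" by auto
    define \<phi>2 where "\<phi>2 w e = \<phi> (T' w) (T' e)" for w e
    define \<psi>2 where "\<psi>2 w = \<psi> (T' w)" for w
    have s\<phi>2: "smooth_form ?V2 \<phi>2"
      unfolding smooth_form_def smooth_sec_def \<phi>2_def
      by (intro ballI allI smooth_comp_linear[OF V2 V T'V2 lT'] smooth_formD[OF s\<phi>] T'B)
    have s\<psi>2: "smooth_sec ?V2 \<psi>2"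
      unfolding smooth_sec_def \<psi>2_def
      by (intro allI smooth_comp_linear[OF V2 V T'V2 lT'] smooth_secD[OF s\<psi>])
    have sGV: "\<And>c \<alpha> \<beta>. c \<in> Basis \<Longrightarrow> smooth V (\<lambda>z. ?G z c $ \<alpha> $ \<beta>)"
      using sGt[OF V VO] .
    have eq2: "Dwedge G \<phi>2 w a b = kappa G \<psi>2 w a b" if w: "w \<in> ?V2" and a: "a \<in> Basis" and b: "b \<in> Basis" for w a b
    proof -
      have wV: "T' w \<in> V" using w by simp
      have vd\<phi>: "vdiff (\<lambda>z. \<phi> z (T' c)) (T' w)" if "c \<in> Basis" for c
        unfolding vdiff_def using smooth_diff[OF smooth_formD[OF s\<phi> T'B[OF that]] V wV] by blast
      have vdD: "vdiff (\<lambda>z. Dconn ?G \<psi> z (T' c)) (T' w)" if "c \<in> Basis" for c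
        unfolding vdiff_def
        using smooth_diff[OF smooth_Dconn[where G="?G", OF V T'B[OF that] s\<psi> sGV[OF T'B[OF that]]] V wV] by blast
      have "Dwedge G \<phi>2 w a b = Dwedge ?G \<phi> (T' w) (T' a) (T' b)"
        unfolding \<phi>2_def by (rule Dwedge_lin[OF lT' inv1 vd\<phi>[OF a] vd\<phi>[OF b]])
      also have "\<dots> = kappa ?G \<psi> (T' w) (T' a) (T' b)"
        using eq wV T'B[OF a] T'B[OF b] by blast
      also have "\<dots> = Dwedge G (\<lambda>y e. Dconn ?G \<psi> (T' y) (T' e)) w a b"
        unfolding kappa_def by (rule Dwedge_lin[OF lT' inv1 vdD[OF a] vdD[OF b], symmetric])
      also have "\<dots> = Dwedge G (Dconn G \<psi>2) w a b"
      proof (rule Dwedge_local[OF V2 w])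
        fix y assume y: "y \<in> ?V2"
        then have vd: "vdiff \<psi> (T' y)" using smooth_sec_vdiff[OF s\<psi> V] by simp
        show "Dconn ?G \<psi> (T' y) (T' a) = Dconn G \<psi>2 y a"
          unfolding \<psi>2_def by (rule Dconn_lin[OF lT' inv1 vd, symmetric])
        show "Dconn ?G \<psi> (T' y) (T' b) = Dconn G \<psi>2 y b"
          unfolding \<psi>2_def by (rule Dconn_lin[OF lT' inv1 vd, symmetric])
      qed
      finally show ?thesis unfolding kappa_def .
    qed
    note ex3 = ex[unfolded exact_connection_def, THEN conjunct2, THEN conjunct2]
    have pre: "open ?V2 \<and> ?V2 \<subseteq> Om \<and> smooth_form ?V2 \<phi>2 \<and> smooth_sec ?V2 \<psi>2 \<and>
        (\<forall>x\<in>?V2. \<forall>a\<in>Basis. \<forall>b\<in>Basis. Dwedge G \<phi>2 x a b = kappa G \<psi>2 x a b)"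
      using V2 V2O s\<phi>2 s\<psi>2 eq2 by blast
    have Tz0: "T z0 \<in> ?V2" using z0 inv2 by simp
    obtain W2 \<eta>2 where W2: "open W2" "T z0 \<in> W2" "W2 \<subseteq> ?V2" and s\<eta>2: "smooth_sec W2 \<eta>2"
      and e\<eta>2: "\<And>y a. y \<in> W2 \<Longrightarrow> a \<in> Basis \<Longrightarrow> \<phi>2 y a = Dconn G \<eta>2 y a"
      using mp[OF spec[OF spec[OF spec[OF ex3, of ?V2], of \<phi>2], of \<psi>2] pre] Tz0 by metis
    let ?W = "T -` W2"
    have W: "open ?W" by (rule continuous_imp_open_vimage[OF cT]) (use W2 in auto)
    have z0W: "z0 \<in> ?W" using W2 by simp
    have WV: "?W \<subseteq> V"
    proof
      fix z assume "z \<in> ?W"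
      then have "T z \<in> ?V2" using W2(3) by auto
      then have "T' (T z) \<in> V" by simp
      then show "z \<in> V" using inv2 by simp
    qed
    have s\<eta>: "smooth_sec ?W (\<lambda>z. \<eta>2 (T z))"
      unfolding smooth_sec_def
      by (intro allI smooth_comp_linear[OF W W2(1) _ lT] smooth_secD[OF s\<eta>2]) auto
    have main: "\<phi> z c = Dconn ?G (\<lambda>z. \<eta>2 (T z)) z c" if z: "z \<in> ?W" and c: "c \<in> Basis" for z c
    proof -
      have Tz: "T z \<in> W2" using z by simp
      have "pd c (\<lambda>y. \<eta>2 (T y) $ \<alpha>) z = pd (T c) (\<lambda>x. \<eta>2 x $ \<alpha>) (T z)" for \<alpha>
        using pd_lin[OF lT, of "\<lambda>x. \<eta>2 x $ \<alpha>" z c] smooth_diff[OF smooth_secD[OF s\<eta>2] W2(1) Tz] by simp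
      then have "Dconn ?G (\<lambda>z. \<eta>2 (T z)) z c = Dconn G \<eta>2 (T z) (T c)"
        by (simp add: vec_eq_iff Dconn_nth)
      also have "\<dots> = \<phi>2 (T z) (T c)" using e\<eta>2[OF Tz TB[OF c]] by simp
      also have "\<dots> = \<phi> z c" unfolding \<phi>2_def inv2 ..
      finally show ?thesis by simp
    qed
    show ?thesis
      by (rule exI[of _ "?W"], intro conjI exI[of _ "\<lambda>z. \<eta>2 (T z)"] W z0W WV s\<eta>)
         (use main in blast)
  qed
  have part3': "\<forall>V \<phi> \<psi>. open V \<and> V \<subseteq> ?Om \<and> smooth_form V \<phi> \<and> smooth_sec V \<psi> \<and>
        (\<forall>x\<in>V. \<forall>a\<in>Basis. \<forall>b\<in>Basis. Dwedge ?G \<phi> x a b = kappa ?G \<psi> x a b) \<longrightarrow>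
        (\<forall>x\<in>V. \<exists>W. open W \<and> x \<in> W \<and> W \<subseteq> V \<and>
            (\<exists>\<eta>. smooth_sec W \<eta> \<and> (\<forall>y\<in>W. \<forall>a\<in>Basis. \<phi> y a = Dconn ?G \<eta> y a)))"
  proof (intro allI impI ballI)
    fix V \<phi> \<psi> x
    assume H: "open V \<and> V \<subseteq> ?Om \<and> smooth_form V \<phi> \<and> smooth_sec V \<psi> \<and>
        (\<forall>x\<in>V. \<forall>a\<in>Basis. \<forall>b\<in>Basis. Dwedge ?G \<phi> x a b = kappa ?G \<psi> x a b)" and x: "x \<in> V"
    from H have h1: "open V" and h2: "V \<subseteq> ?Om" and h3: "smooth_form V \<phi>" and h4: "smooth_sec V \<psi>"
      and h5: "\<forall>x\<in>V. \<forall>a\<in>Basis. \<forall>b\<in>Basis. Dwedge ?G \<phi> x a b = kappa ?G \<psi> x a b"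
      by blast+
    show "\<exists>W. open W \<and> x \<in> W \<and> W \<subseteq> V \<and>
            (\<exists>\<eta>. smooth_sec W \<eta> \<and> (\<forall>y\<in>W. \<forall>a\<in>Basis. \<phi> y a = Dconn ?G \<eta> y a))"
      by (rule part3[OF h1 h2 h3 h4 h5 x])
  qed
  show ?thesis unfolding exact_connection_def
    by (intro conjI part1 part2 part3')
qed

definition prL :: "real^('k::finite + 'l::finite) \<Rightarrow> real^'k" where "prL v = (\<chi> \<alpha>. v $ Inl \<alpha>)"
definition prR :: "real^('k::finite + 'l::finite) \<Rightarrow> real^'l" where "prR v = (\<chi> \<beta>. v $ Inr \<beta>)"
definition jn :: "real^'k::finite \<Rightarrow> real^'l::finite \<Rightarrow> real^('k + 'l)" where
  "jn u w = (\<chi> i. case i of Inl \<alpha> \<Rightarrow> u $ \<alpha> | Inr \<beta> \<Rightarrow> w $ \<beta>)"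

lemma prL_nth[simp]: "prL v $ \<alpha> = v $ Inl \<alpha>" by (simp add: prL_def)
lemma prR_nth[simp]: "prR v $ \<beta> = v $ Inr \<beta>" by (simp add: prR_def)
lemma jn_L[simp]: "jn u w $ Inl \<alpha> = u $ \<alpha>" by (simp add: jn_def)
lemma jn_R[simp]: "jn u w $ Inr \<beta> = w $ \<beta>" by (simp add: jn_def)
lemma prL_jn[simp]: "prL (jn u w) = u" by (simp add: vec_eq_iff)
lemma prR_jn[simp]: "prR (jn u w) = w" by (simp add: vec_eq_iff)
lemma jn_pr: "jn (prL v) (prR v) = v"
  by (simp add: vec_eq_iff jn_def split: sum.split)

lemma sum_UNIV_Plus: "(\<Sum>i\<in>(UNIV::('k::finite + 'l::finite) set). f i) = (\<Sum>\<alpha>\<in>UNIV. f (Inl \<alpha>)) + (\<Sum>\<beta>\<in>UNIV. f (Inr \<beta>))"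
  using sum.Plus[of "UNIV::'k set" "UNIV::'l set" f] by (simp add: o_def)

lemma sc_LL[simp]: "sum_conn G1 G2 z c $ Inl \<alpha> $ Inl \<beta> = G1 z c $ \<alpha> $ \<beta>" by (simp add: sum_conn_def)
lemma sc_RR[simp]: "sum_conn G1 G2 z c $ Inr \<alpha> $ Inr \<beta> = G2 z c $ \<alpha> $ \<beta>" by (simp add: sum_conn_def)
lemma sc_LR[simp]: "sum_conn G1 G2 z c $ Inl \<alpha> $ Inr \<beta> = 0" by (simp add: sum_conn_def)
lemma sc_RL[simp]: "sum_conn G1 G2 z c $ Inr \<alpha> $ Inl \<beta> = 0" by (simp add: sum_conn_def)

lemma Dwedge_L: "Dwedge G1 (\<lambda>y c. prL (\<phi> y c)) z a b = prL (Dwedge (sum_conn G1 G2) \<phi> z a b)"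
  by (simp add: vec_eq_iff Dwedge_nth sum_UNIV_Plus)
lemma Dwedge_R: "Dwedge G2 (\<lambda>y c. prR (\<phi> y c)) z a b = prR (Dwedge (sum_conn G1 G2) \<phi> z a b)"
  by (simp add: vec_eq_iff Dwedge_nth sum_UNIV_Plus)
lemma Dconn_L: "Dconn G1 (\<lambda>y. prL (\<eta> y)) z c = prL (Dconn (sum_conn G1 G2) \<eta> z c)"
  by (simp add: vec_eq_iff Dconn_nth sum_UNIV_Plus)
lemma Dconn_R: "Dconn G2 (\<lambda>y. prR (\<eta> y)) z c = prR (Dconn (sum_conn G1 G2) \<eta> z c)"
  by (simp add: vec_eq_iff Dconn_nth sum_UNIV_Plus)
lemma kappa_L: "kappa G1 (\<lambda>y. prL (\<psi> y)) z a b = prL (kappa (sum_conn G1 G2) \<psi> z a b)"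
proof -
  have "Dconn G1 (\<lambda>y. prL (\<psi> y)) = (\<lambda>y c. prL (Dconn (sum_conn G1 G2) \<psi> y c))"
    by (intro ext Dconn_L)
  then show ?thesis unfolding kappa_def by (simp add: Dwedge_L)
qed
lemma kappa_R: "kappa G2 (\<lambda>y. prR (\<psi> y)) z a b = prR (kappa (sum_conn G1 G2) \<psi> z a b)"
proof -
  have "Dconn G2 (\<lambda>y. prR (\<psi> y)) = (\<lambda>y c. prR (Dconn (sum_conn G1 G2) \<psi> y c))"
    by (intro ext Dconn_R)
  then show ?thesis unfolding kappa_def by (simp add: Dwedge_R)
qed

lemma curv_sum_mv:
  "prL (curv (sum_conn G1 G2) z c d *v v) = curv G1 z c d *v prL v"
  "prR (curv (sum_conn G1 G2) z c d *v v) = curv G2 z c d *v prR v"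
  by (simp_all add: vec_eq_iff mv_nth curv_def pdm_nth matrix_matrix_mult_def sum_UNIV_Plus pd_const)

lemma vec_sum_zero: "(v = 0) \<longleftrightarrow> prL v = 0 \<and> prR v = 0"
  by (metis jn_pr prL_jn prR_jn zero_index vec_eq_iff prL_nth prR_nth)

lemma subspace_null: "subspace {v::real^'k. \<forall>a\<in>A. \<forall>b\<in>B. M a b *v v = 0}"
  by (auto simp: subspace_def matrix_vector_right_distrib matrix_vector_mult_scaleR)

lemma dim_null_sum:
  fixes G1 :: "'c \<Rightarrow> 'c::euclidean_space \<Rightarrow> real^'k^'k" and G2 :: "'c \<Rightarrow> 'c \<Rightarrow> real^'l^'l"
  shows "dim {v::real^('k+'l). \<forall>c\<in>Basis. \<forall>d\<in>Basis. curv (sum_conn G1 G2) z c d *v v = 0} =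
    dim {v::real^'k. \<forall>c\<in>Basis. \<forall>d\<in>Basis. curv G1 z c d *v v = 0} +
    dim {v::real^'l. \<forall>c\<in>Basis. \<forall>d\<in>Basis. curv G2 z c d *v v = 0}"
proof -
  let ?N = "{v::real^('k+'l). \<forall>c\<in>Basis. \<forall>d\<in>Basis. curv (sum_conn G1 G2) z c d *v v = 0}"
  let ?N1 = "{v::real^'k. \<forall>c\<in>Basis. \<forall>d\<in>Basis. curv G1 z c d *v v = 0}"
  let ?N2 = "{v::real^'l. \<forall>c\<in>Basis. \<forall>d\<in>Basis. curv G2 z c d *v v = 0}"
  let ?J = "\<lambda>p::(real^'k) \<times> (real^'l). jn (fst p) (snd p)"
  have "?N = ?J ` (?N1 \<times> ?N2)"
  proof (intro set_eqI iffI)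
    fix v assume v: "v \<in> ?N"
    have "prL v \<in> ?N1"
    proof (clarsimp)
      fix c d :: 'c assume "c \<in> Basis" "d \<in> Basis"
      then have "curv (sum_conn G1 G2) z c d *v v = 0" using v by blast
      then have "prL (curv (sum_conn G1 G2) z c d *v v) = 0" by (simp add: vec_eq_iff)
      then show "curv G1 z c d *v prL v = 0" by (simp only: curv_sum_mv)
    qed
    moreover have "prR v \<in> ?N2"
    proof (clarsimp)
      fix c d :: 'c assume "c \<in> Basis" "d \<in> Basis"
      then have "curv (sum_conn G1 G2) z c d *v v = 0" using v by blast
      then have "prR (curv (sum_conn G1 G2) z c d *v v) = 0" by (simp add: vec_eq_iff)
      then show "curv G2 z c d *v prR v = 0" by (simp only: curv_sum_mv)
    qed
    ultimately have "(prL v, prR v) \<in> ?N1 \<times> ?N2" by simp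
    moreover have "v = ?J (prL v, prR v)" by (simp add: jn_pr)
    ultimately show "v \<in> ?J ` (?N1 \<times> ?N2)" by blast
  next
    fix v assume "v \<in> ?J ` (?N1 \<times> ?N2)"
    then obtain u w where vj: "v = jn u w" and u: "u \<in> ?N1" and w: "w \<in> ?N2" by auto
    show "v \<in> ?N"
    proof (clarsimp)
      fix c d :: 'c assume cd: "c \<in> Basis" "d \<in> Basis"
      have "prL (curv (sum_conn G1 G2) z c d *v v) = 0"
        using u cd by (simp add: curv_sum_mv vj)
      moreover have "prR (curv (sum_conn G1 G2) z c d *v v) = 0"
        using w cd by (simp add: curv_sum_mv vj)
      ultimately show "curv (sum_conn G1 G2) z c d *v v = 0" using vec_sum_zero by blast
    qed
  qed
  moreover have lin: "linear ?J"
    by (auto simp: linear_iff vec_eq_iff jn_def split: sum.split)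
  moreover have "inj ?J" unfolding inj_def
  proof (intro allI impI)
    fix p q :: "(real^'k) \<times> (real^'l)" assume h: "jn (fst p) (snd p) = jn (fst q) (snd q)"
    have "fst p = fst q" using arg_cong[OF h, of prL] by simp
    moreover have "snd p = snd q" using arg_cong[OF h, of prR] by simp
    ultimately show "p = q" by (simp add: prod_eq_iff)
  qed
  then have "inj_on ?J (span (?N1 \<times> ?N2))" by (rule inj_on_subset) simp
  ultimately have "dim ?N = dim (?N1 \<times> ?N2)"
    using eucl.dim_image_eq[OF lin] by simp
  also have "\<dots> = dim ?N1 + dim ?N2"
    by (rule eucl.dim_Times) (rule subspace_null)+
  finally show ?thesis .
qed

lemma sum_exact:
  fixes G1 :: "'c::euclidean_space \<Rightarrow> 'c \<Rightarrow> real^'k^'k" and G2 :: "'c \<Rightarrow> 'c \<Rightarrow> real^'l^'l"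
  assumes Om: "open Om" and e1: "exact_connection Om G1" and e2: "exact_connection Om G2"
  shows "exact_connection Om (sum_conn G1 G2)"
proof -
  let ?S = "sum_conn G1 G2"
  have s1: "smooth_connection Om G1" and cr1: "\<forall>x\<in>Om. \<forall>y\<in>Om. curv_rank G1 x = curv_rank G1 y"
    using e1 unfolding exact_connection_def by blast+
  have s2: "smooth_connection Om G2" and cr2: "\<forall>x\<in>Om. \<forall>y\<in>Om. curv_rank G2 x = curv_rank G2 y"
    using e2 unfolding exact_connection_def by blast+
  have part1: "smooth_connection Om ?S"
    unfolding smooth_connection_def
  proof (intro ballI allI)
    fix c :: 'c and i j :: "'k + 'l" assume c: "c \<in> Basis"
    show "smooth Om (\<lambda>z. ?S z c $ i $ j)"
    proof (cases i)
      case (Inl \<alpha>)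
      then show ?thesis
      proof (cases j)
        case (Inl \<beta>) then show ?thesis using s1 c \<open>i = Inl \<alpha>\<close> by (simp add: smooth_connection_def)
      next
        case (Inr \<beta>) then show ?thesis using \<open>i = Inl \<alpha>\<close> by (simp add: smooth_const)
      qed
    next
      case (Inr \<alpha>)
      then show ?thesis
      proof (cases j)
        case (Inl \<beta>) then show ?thesis using \<open>i = Inr \<alpha>\<close> by (simp add: smooth_const)
      next
        case (Inr \<beta>) then show ?thesis using s2 c \<open>i = Inr \<alpha>\<close> by (simp add: smooth_connection_def)
      qed
    qed
  qed
  have part2: "\<forall>x\<in>Om. \<forall>y\<in>Om. curv_rank ?S x = curv_rank ?S y"
  proof (intro ballI)
    fix x y assume x: "x \<in> Om" and y: "y \<in> Om"
    let ?d1 = "\<lambda>z. dim {v::real^'k. \<forall>c\<in>Basis. \<forall>d\<in>Basis. curv G1 z c d *v v = 0}"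
    let ?d2 = "\<lambda>z. dim {v::real^'l. \<forall>c\<in>Basis. \<forall>d\<in>Basis. curv G2 z c d *v v = 0}"
    have "CARD('k) - ?d1 x = CARD('k) - ?d1 y"
      using cr1 x y unfolding curv_rank_def by blast
    moreover have "?d1 x \<le> CARD('k)" "?d1 y \<le> CARD('k)" by (rule dim_subset_UNIV_cart)+
    ultimately have d1: "?d1 x = ?d1 y" by linarith
    have "CARD('l) - ?d2 x = CARD('l) - ?d2 y"
      using cr2 x y unfolding curv_rank_def by blast
    moreover have "?d2 x \<le> CARD('l)" "?d2 y \<le> CARD('l)" by (rule dim_subset_UNIV_cart)+
    ultimately have d2: "?d2 x = ?d2 y" by linarith
    show "curv_rank ?S x = curv_rank ?S y"
      unfolding curv_rank_def dim_null_sum using d1 d2 by simp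
  qed
  have part3: "\<exists>W. open W \<and> x \<in> W \<and> W \<subseteq> V \<and>
            (\<exists>\<eta>. smooth_sec W \<eta> \<and> (\<forall>y\<in>W. \<forall>a\<in>Basis. \<phi> y a = Dconn ?S \<eta> y a))"
    if V: "open V" and VO: "V \<subseteq> Om" and s\<phi>: "smooth_form V \<phi>" and s\<psi>: "smooth_sec V \<psi>"
      and eq: "\<forall>x\<in>V. \<forall>a\<in>Basis. \<forall>b\<in>Basis. Dwedge ?S \<phi> x a b = kappa ?S \<psi> x a b"
      and x: "x \<in> V" for V \<phi> \<psi> x
  proof -
    define \<phi>1 where "\<phi>1 y c = prL (\<phi> y c)" for y c
    define \<phi>2 where "\<phi>2 y c = prR (\<phi> y c)" for y c
    define \<psi>1 where "\<psi>1 y = prL (\<psi> y)" for y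
    define \<psi>2 where "\<psi>2 y = prR (\<psi> y)" for y
    have s\<phi>1: "smooth_form V \<phi>1" and s\<phi>2: "smooth_form V \<phi>2"
      using s\<phi> unfolding smooth_form_def smooth_sec_def \<phi>1_def \<phi>2_def by simp_all
    have s\<psi>1: "smooth_sec V \<psi>1" and s\<psi>2: "smooth_sec V \<psi>2"
      using s\<psi> unfolding smooth_sec_def \<psi>1_def \<psi>2_def by simp_all
    have eq1: "\<forall>x\<in>V. \<forall>a\<in>Basis. \<forall>b\<in>Basis. Dwedge G1 \<phi>1 x a b = kappa G1 \<psi>1 x a b"
      using eq unfolding \<phi>1_def \<psi>1_def Dwedge_L[of G1 \<phi> _ _ _ G2] kappa_L[of G1 \<psi> _ _ _ G2] by simp
    have eq2: "\<forall>x\<in>V. \<forall>a\<in>Basis. \<forall>b\<in>Basis. Dwedge G2 \<phi>2 x a b = kappa G2 \<psi>2 x a b"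
      using eq unfolding \<phi>2_def \<psi>2_def Dwedge_R[of G2 \<phi> _ _ _ G1] kappa_R[of G2 \<psi> _ _ _ G1] by simp
    note ex1 = e1[unfolded exact_connection_def, THEN conjunct2, THEN conjunct2]
    note ex2 = e2[unfolded exact_connection_def, THEN conjunct2, THEN conjunct2]
    have pre1: "open V \<and> V \<subseteq> Om \<and> smooth_form V \<phi>1 \<and> smooth_sec V \<psi>1 \<and>
        (\<forall>x\<in>V. \<forall>a\<in>Basis. \<forall>b\<in>Basis. Dwedge G1 \<phi>1 x a b = kappa G1 \<psi>1 x a b)"
      using V VO s\<phi>1 s\<psi>1 eq1 by blast
    have pre2: "open V \<and> V \<subseteq> Om \<and> smooth_form V \<phi>2 \<and> smooth_sec V \<psi>2 \<and>
        (\<forall>x\<in>V. \<forall>a\<in>Basis. \<forall>b\<in>Basis. Dwedge G2 \<phi>2 x a b = kappa G2 \<psi>2 x a b)"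
      using V VO s\<phi>2 s\<psi>2 eq2 by blast
    obtain W1 \<eta>1 where W1: "open W1" "x \<in> W1" "W1 \<subseteq> V" and s\<eta>1: "smooth_sec W1 \<eta>1"
      and e\<eta>1: "\<And>y a. y \<in> W1 \<Longrightarrow> a \<in> Basis \<Longrightarrow> \<phi>1 y a = Dconn G1 \<eta>1 y a"
      using mp[OF spec[OF spec[OF spec[OF ex1, of V], of \<phi>1], of \<psi>1] pre1] x by metis
    obtain W2 \<eta>2 where W2: "open W2" "x \<in> W2" "W2 \<subseteq> V" and s\<eta>2: "smooth_sec W2 \<eta>2"
      and e\<eta>2: "\<And>y a. y \<in> W2 \<Longrightarrow> a \<in> Basis \<Longrightarrow> \<phi>2 y a = Dconn G2 \<eta>2 y a"
      using mp[OF spec[OF spec[OF spec[OF ex2, of V], of \<phi>2], of \<psi>2] pre2] x by metis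
    let ?W = "W1 \<inter> W2"
    define \<eta> where "\<eta> z = jn (\<eta>1 z) (\<eta>2 z)" for z
    have W: "open ?W" using W1 W2 by auto
    have s\<eta>: "smooth_sec ?W \<eta>"
      unfolding smooth_sec_def
    proof
      fix i :: "'k + 'l"
      show "smooth ?W (\<lambda>z. \<eta> z $ i)"
      proof (cases i)
        case (Inl \<alpha>) then show ?thesis
          using smooth_subset[OF smooth_secD[OF s\<eta>1], of ?W \<alpha>] by (simp add: \<eta>_def)
      next
        case (Inr \<beta>) then show ?thesis
          using smooth_subset[OF smooth_secD[OF s\<eta>2], of ?W \<beta>] by (simp add: \<eta>_def)
      qed
    qed
    have main: "\<phi> z c = Dconn ?S \<eta> z c" if z: "z \<in> ?W" and c: "c \<in> Basis" for z c
    proof -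
      have "Dconn ?S \<eta> z c = jn (prL (Dconn ?S \<eta> z c)) (prR (Dconn ?S \<eta> z c))" by (simp add: jn_pr)
      also have "prL (Dconn ?S \<eta> z c) = Dconn G1 \<eta>1 z c"
        using Dconn_L[of G1 \<eta> z c G2] by (simp add: \<eta>_def)
      also have "prR (Dconn ?S \<eta> z c) = Dconn G2 \<eta>2 z c"
        using Dconn_R[of G2 \<eta> z c G1] by (simp add: \<eta>_def)
      also have "jn (Dconn G1 \<eta>1 z c) (Dconn G2 \<eta>2 z c) = jn (\<phi>1 z c) (\<phi>2 z c)"
        using e\<eta>1 e\<eta>2 z c by simp
      also have "\<dots> = \<phi> z c" by (simp add: \<phi>1_def \<phi>2_def jn_pr)
      finally show ?thesis by simp
    qed
    have WV: "?W \<subseteq> V" using W1 by auto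
    have xW: "x \<in> ?W" using W1 W2 by auto
    have main': "\<forall>y\<in>?W. \<forall>a\<in>Basis. \<phi> y a = Dconn ?S \<eta> y a" using main by blast
    show ?thesis
      by (rule exI[of _ "?W"], intro conjI exI[of _ \<eta>] W xW WV s\<eta> main')
  qed
  have part3': "\<forall>V \<phi> \<psi>. open V \<and> V \<subseteq> Om \<and> smooth_form V \<phi> \<and> smooth_sec V \<psi> \<and>
        (\<forall>x\<in>V. \<forall>a\<in>Basis. \<forall>b\<in>Basis. Dwedge ?S \<phi> x a b = kappa ?S \<psi> x a b) \<longrightarrow>
        (\<forall>x\<in>V. \<exists>W. open W \<and> x \<in> W \<and> W \<subseteq> V \<and>
            (\<exists>\<eta>. smooth_sec W \<eta> \<and> (\<forall>y\<in>W. \<forall>a\<in>Basis. \<phi> y a = Dconn ?S \<eta> y a)))"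
  proof (intro allI impI ballI)
    fix V \<phi> \<psi> x
    assume H: "open V \<and> V \<subseteq> Om \<and> smooth_form V \<phi> \<and> smooth_sec V \<psi> \<and>
        (\<forall>x\<in>V. \<forall>a\<in>Basis. \<forall>b\<in>Basis. Dwedge ?S \<phi> x a b = kappa ?S \<psi> x a b)" and x: "x \<in> V"
    from H have h1: "open V" and h2: "V \<subseteq> Om" and h3: "smooth_form V \<phi>" and h4: "smooth_sec V \<psi>"
      and h5: "\<forall>x\<in>V. \<forall>a\<in>Basis. \<forall>b\<in>Basis. Dwedge ?S \<phi> x a b = kappa ?S \<psi> x a b"
      by blast+
    show "\<exists>W. open W \<and> x \<in> W \<and> W \<subseteq> V \<and>
            (\<exists>\<eta>. smooth_sec W \<eta> \<and> (\<forall>y\<in>W. \<forall>a\<in>Basis. \<phi> y a = Dconn ?S \<eta> y a))"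
      by (rule part3[OF h1 h2 h3 h4 h5 x])
  qed
  show ?thesis unfolding exact_connection_def
    by (intro conjI part1 part2 part3')
qed

theorem proposition2p7:
  fixes U :: "'a::euclidean_space set" and Ub :: "'b::euclidean_space set"
    and \<Gamma> :: "'a \<Rightarrow> 'a \<Rightarrow> real^'k^'k" and \<Gamma>b :: "'b \<Rightarrow> 'b \<Rightarrow> real^'l^'l"
  assumes "open U" and "open Ub"
    and "exact_connection U \<Gamma>" and "exact_connection Ub \<Gamma>b"
  shows "exact_connection (U \<times> Ub) (pull_fst \<Gamma> :: 'a \<times> 'b \<Rightarrow> _) \<and>
         exact_connection (U \<times> Ub) (pull_snd \<Gamma>b :: 'a \<times> 'b \<Rightarrow> _) \<and>
         exact_connection (U \<times> Ub) (sum_conn (pull_fst \<Gamma> :: 'a \<times> 'b \<Rightarrow> _) (pull_snd \<Gamma>b))"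
proof -
  have A: "exact_connection (U \<times> Ub) (pull_fst \<Gamma> :: 'a \<times> 'b \<Rightarrow> _)"
    by (rule pull_fst_exact[OF assms(1,2,3)])
  have e: "exact_connection (Ub \<times> U) (pull_fst \<Gamma>b :: 'b \<times> 'a \<Rightarrow> _)"
    by (rule pull_fst_exact[OF assms(2,1,4)])
  let ?T = "\<lambda>z::'a \<times> 'b. (snd z, fst z)"
  let ?T' = "\<lambda>z::'b \<times> 'a. (snd z, fst z)"
  have lT: "bounded_linear ?T" by (intro bounded_linear_Pair bounded_linear_fst bounded_linear_snd)
  have lT': "bounded_linear ?T'" by (intro bounded_linear_Pair bounded_linear_fst bounded_linear_snd)
  have TB: "?T b \<in> Basis" if "b \<in> Basis" for b using that by (auto simp: Basis_prod_def)
  have T'B: "?T' b \<in> Basis" if "b \<in> Basis" for b using that by (auto simp: Basis_prod_def)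
  have O2: "open (Ub \<times> U)" using assms(1,2) by (simp add: open_Times)
  have "exact_connection (?T -` (Ub \<times> U)) (\<lambda>z c. pull_fst \<Gamma>b (?T z) (?T c))"
    by (rule exact_transport[OF lT lT' _ _ TB T'B O2 e]) simp_all
  moreover have "?T -` (Ub \<times> U) = U \<times> Ub" by auto
  moreover have "(\<lambda>z c. pull_fst \<Gamma>b (?T z) (?T c)) = (pull_snd \<Gamma>b :: 'a \<times> 'b \<Rightarrow> _)"
    by (simp add: pull_fst_def pull_snd_def fun_eq_iff)
  ultimately have B: "exact_connection (U \<times> Ub) (pull_snd \<Gamma>b :: 'a \<times> 'b \<Rightarrow> _)" by simp
  have C: "exact_connection (U \<times> Ub) (sum_conn (pull_fst \<Gamma> :: 'a \<times> 'b \<Rightarrow> _) (pull_snd \<Gamma>b))"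
    by (rule sum_exact[OF _ A B]) (use assms(1,2) in \<open>simp add: open_Times\<close>)
  show ?thesis using A B C by blast
qed


end
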